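(* Let $\mu^\pm$ be probability measures on $\mathbb{R}^d$ with compact supports $X^\pm$, and let $c\in\mathscr{C}(X^-\times X^+)$. Then for every $\varepsilon>0$, \[v_\varepsilon'=\mathrm{Ent}(\gamma_\varepsilon\,|\,\mu^-\otimes\mu^+).\] Moreover, if there exists $\gamma_0\in\mathsf{Opt}(\mu^-,\mu^+)$ with $\mathrm{Ent}(\gamma_0\,|\,\mu^-\otimes\mu^+)<+\infty$, then $\varepsilon\mapsto v_\varepsilon$ belongs to $\mathscr{C}^1([0,+\infty))$, its right derivative at $\varepsilon=0$ is \[v'_\varepsilon|_{\varepsilon=0}=\inf_{\gamma\in\mathsf{Opt}(\mu^-,\mu^+)}\mathrm{Ent}(\gamma\,|\,\mu^-\otimes\mu^+),\] i.e. $v_\varepsilon-v_0=\varepsilon\inf_{\gamma\in\mathsf{Opt}(\mu^-,\mu^+)}\mathrm{Ent}(\gamma\,|\,\mu^-\otimes\mu^+)+o(\varepsilon)$ as $\varepsilon\downarrow 0$, and $\gamma_\varepsilon$ converges narrowly as $\varepsilon\downarrow0$ to the unique coupling $\gamma^\ast\in\mathsf{Opt}(\mu^-,\mu^+)$ of minimal entropy, $\gamma^\ast=\operatorname{argmin}_{\gamma\in\mathsf{Opt}(\mu^-,\mu^+)}\mathrm{Ent}(\gamma\,|\,\mu^-\otimes\mu^+)$.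
   Context: Let $\Pi(\mu^-,\mu^+)$ be the set of probability measures on $X^-\times X^+$ with marginals $\mu^-$ and $\mu^+$. For probability measures $p,q$, $\mathrm{Ent}(p\,|\,q)=\int \rho\log\rho\,\mathrm{d}q$ if $p=\rho q$, and $+\infty$ otherwise. For $\varepsilon>0$, $v_\varepsilon \coloneqq \inf_{\gamma\in\Pi(\mu^-,\mu^+)}\{\int c\,\mathrm{d}\gamma + \varepsilon\,\mathrm{Ent}(\gamma\,|\,\mu^-\otimes\mu^+)\}$, whose (unique) minimizer is denoted $\gamma_\varepsilon$; $v_0\coloneqq \inf_{\gamma\in\Pi(\mu^-,\mu^+)}\int c\,\mathrm{d}\gamma$, and $\mathsf{Opt}(\mu^-,\mu^+)$ denotes the set of minimizers of this last problem. *)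

theory Defs
  imports "HOL-Probability.Probability"
begin

definition mu_support :: "'a::metric_space measure \<Rightarrow> 'a set" where
  "mu_support M = {x. \<forall>e>0. emeasure M (ball x e) > 0}"

text \<open>Since q is a probability measure in all uses, the negative part of rho log rho is
  integrable, so non-integrability means the integral is +infinity.\<close>
definition rel_ent :: "'b measure \<Rightarrow> 'b measure \<Rightarrow> ereal" where
  "rel_ent p q =
     (if sets p = sets q \<and> absolutely_continuous q p \<and>
         integrable q (\<lambda>x. enn2real (RN_deriv q p x) * ln (enn2real (RN_deriv q p x)))
      then ereal (\<integral>x. enn2real (RN_deriv q p x) * ln (enn2real (RN_deriv q p x)) \<partial>q)
      else \<infinity>)"

definition couplings :: "'a measure \<Rightarrow> 'b measure \<Rightarrow> ('a \<times> 'b) measure set" where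
  "couplings M N = {\<gamma>. prob_space \<gamma> \<and> sets \<gamma> = sets (M \<Otimes>\<^sub>M N) \<and>
                        distr \<gamma> M fst = M \<and> distr \<gamma> N snd = N}"

text \<open>Transport cost; c is only given on X^- x X^+ (the supports), so we integrate over that set
  (which carries full mass for every coupling).\<close>
definition ot_cost :: "'a::metric_space measure \<Rightarrow> 'a measure \<Rightarrow> ('a \<times> 'a \<Rightarrow> real)
                        \<Rightarrow> ('a \<times> 'a) measure \<Rightarrow> real" where
  "ot_cost M N c \<gamma> = (LINT z : mu_support M \<times> mu_support N | \<gamma>. c z)"

definition ent_obj :: "'a::metric_space measure \<Rightarrow> 'a measure \<Rightarrow> ('a \<times> 'a \<Rightarrow> real)
                        \<Rightarrow> real \<Rightarrow> ('a \<times> 'a) measure \<Rightarrow> ereal" where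
  "ent_obj M N c \<epsilon> \<gamma> = ereal (ot_cost M N c \<gamma>) + ereal \<epsilon> * rel_ent \<gamma> (M \<Otimes>\<^sub>M N)"

text \<open>v_eps (for eps = 0 this is the unregularised value v_0, since 0 * infinity = 0 in ereal).\<close>
definition ot_val :: "'a::metric_space measure \<Rightarrow> 'a measure \<Rightarrow> ('a \<times> 'a \<Rightarrow> real)
                        \<Rightarrow> real \<Rightarrow> real" where
  "ot_val M N c \<epsilon> = real_of_ereal (INF \<gamma>\<in>couplings M N. ent_obj M N c \<epsilon> \<gamma>)"

definition ent_plan :: "'a::metric_space measure \<Rightarrow> 'a measure \<Rightarrow> ('a \<times> 'a \<Rightarrow> real)
                        \<Rightarrow> real \<Rightarrow> ('a \<times> 'a) measure" where
  "ent_plan M N c \<epsilon> = (THE \<gamma>. \<gamma> \<in> couplings M N \<and>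
       ent_obj M N c \<epsilon> \<gamma> = (INF \<gamma>'\<in>couplings M N. ent_obj M N c \<epsilon> \<gamma>'))"

definition opt_plans :: "'a::metric_space measure \<Rightarrow> 'a measure \<Rightarrow> ('a \<times> 'a \<Rightarrow> real)
                        \<Rightarrow> ('a \<times> 'a) measure set" where
  "opt_plans M N c = {\<gamma> \<in> couplings M N. \<forall>\<gamma>'\<in>couplings M N. ot_cost M N c \<gamma> \<le> ot_cost M N c \<gamma>'}"

definition narrow_tendsto :: "('i \<Rightarrow> 'b::topological_space measure) \<Rightarrow> 'b measure \<Rightarrow> 'i filter \<Rightarrow> bool" where
  "narrow_tendsto P Q F \<longleftrightarrow>
     (\<forall>f :: 'b \<Rightarrow> real. continuous_on UNIV f \<and> bounded (range f) \<longrightarrow>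
        ((\<lambda>i. \<integral>x. f x \<partial>(P i)) \<longlongrightarrow> (\<integral>x. f x \<partial>Q)) F)"

end

theory Submission
  imports Defs "HOL-Real_Asymp.Real_Asymp"
begin


lemma psi_aux:
  fixes t :: real assumes "0 \<le> t" "t < 1"
  shows "ln (1+t) - ln (1-t) - 2*t \<ge> 0"
proof -
  have "(\<lambda>x. ln (1+x) - ln (1-x) - 2*x) 0 \<le> (\<lambda>x. ln (1+x) - ln (1-x) - 2*x) t"
  proof (rule DERIV_nonneg_imp_nondecreasing[OF assms(1)])
    fix x assume x0: "0 \<le> x" and xt: "x \<le> t"
    then have x: "0 \<le> x \<and> x \<le> t" by simp
    then have x1: "x < 1" using assms by linarith
    have "((\<lambda>x. ln (1+x) - ln (1-x) - 2*x) has_real_derivative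
           (1/(1+x) - (-1)/(1-x) - 2)) (at x)"
      using x x1 by (auto intro!: derivative_eq_intros)
    moreover have "1/(1+x) - (-1)/(1-x) - 2 \<ge> 0"
    proof -
      have p0: "(1+x)*(1-x) > 0" using x x1 by simp
      have p1: "(1+x)*(1-x) \<le> 1" using x x1 by (simp add: algebra_simps)
      have "1/(1+x) + 1/(1-x) = 2/((1+x)*(1-x))"
        using x x1 by (simp add: field_simps)
      also have "\<dots> \<ge> 2" using p0 p1 by (simp add: le_divide_eq)
      finally show ?thesis by simp
    qed
    ultimately show "\<exists>y. ((\<lambda>x. ln (1+x) - ln (1-x) - 2*x) has_real_derivative y) (at x) \<and> 0 \<le> y"
      by blast
  qed
  then show ?thesis by simp
qed

lemma psi_pos:
  fixes t :: real assumes "0 \<le> t" "t < 1"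
  shows "(1+t)*ln(1+t) + (1-t)*ln(1-t) \<ge> t^2"
proof -
  have "(\<lambda>x. (1+x)*ln(1+x) + (1-x)*ln(1-x) - x^2) 0 \<le> (\<lambda>x. (1+x)*ln(1+x) + (1-x)*ln(1-x) - x^2) t"
  proof (rule DERIV_nonneg_imp_nondecreasing[OF assms(1)])
    fix x assume x0: "0 \<le> x" and xt: "x \<le> t"
    then have x: "0 \<le> x \<and> x \<le> t" by simp
    then have x1: "x < 1" using assms by linarith
    have D: "((\<lambda>x. (1+x)*ln(1+x) + (1-x)*ln(1-x) - x^2) has_real_derivative
           ((1*ln(1+x) + (1+x)*(1/(1+x))) + ((-1)*ln(1-x) + (1-x)*((-1)/(1-x))) - 2*x)) (at x)"
      using x x1 by (auto intro!: derivative_eq_intros)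
    have eqE: "((1*ln(1+x) + (1+x)*(1/(1+x))) + ((-1)*ln(1-x) + (1-x)*((-1)/(1-x))) - 2*x)
        = ln (1+x) - ln (1-x) - 2*x" using x x1 by (simp add: field_simps)
    have nn: "ln (1+x) - ln (1-x) - 2*x \<ge> 0" using psi_aux x x1 by auto
    have D2: "((\<lambda>x. (1+x)*ln(1+x) + (1-x)*ln(1-x) - x^2) has_real_derivative
           (ln (1+x) - ln (1-x) - 2*x)) (at x)"
      using D eqE by (rule DERIV_cong)
    show "\<exists>y. ((\<lambda>x. (1+x)*ln(1+x) + (1-x)*ln(1-x) - x^2) has_real_derivative y) (at x) \<and> 0 \<le> y"
      using D2 nn by blast
  qed
  then show ?thesis by simp
qed

lemma psi_pos_all:
  fixes t :: real assumes "\<bar>t\<bar> \<le> 1"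
  shows "(1+t)*ln(1+t) + (1-t)*ln(1-t) \<ge> t^2"
proof -
  have sym: "(1+t)*ln(1+t) + (1-t)*ln(1-t) = (1+(-t))*ln(1+(-t)) + (1-(-t))*ln(1-(-t))" by simp
  have main: "(1+s)*ln(1+s) + (1-s)*ln(1-s) \<ge> s^2" if "0 \<le> s" "s \<le> 1" for s :: real
  proof (cases "s = 1")
    case True
    then show ?thesis using ln2_ge_two_thirds by simp
  next
    case False
    then show ?thesis using psi_pos that by simp
  qed
  show ?thesis
  proof (cases "t \<ge> 0")
    case True then show ?thesis using main assms by auto
  next
    case False
    have "(-t)^2 \<le> (1+(-t))*ln(1+(-t)) + (1-(-t))*ln(1-(-t))" using main[of "-t"] assms False by auto
    then show ?thesis by (simp add: add.commute)
  qed
qed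

lemma xlnx_ge: fixes x :: real assumes "0 \<le> x" shows "x * ln x \<ge> x - 1"
proof (cases "x = 0")
  case True then show ?thesis by simp
next
  case False
  then have "x > 0" using assms by simp
  have "ln (1/x) \<le> 1/x - 1" using \<open>x>0\<close> by (intro ln_le_minus_one) simp
  then have "- ln x \<le> 1/x - 1" using \<open>x>0\<close> by (simp add: ln_div)
  then have "x * (- ln x) \<le> x * (1/x - 1)" using \<open>x>0\<close> by (intro mult_left_mono) auto
  then show ?thesis using \<open>x>0\<close> by (simp add: algebra_simps)
qed

definition Gap :: "real \<Rightarrow> real \<Rightarrow> real" where
  "Gap a b = (a * ln a + b * ln b)/2 - ((a+b)/2) * ln ((a+b)/2)"

lemma gap_sq:
  fixes a b :: real assumes "0 \<le> a" "0 \<le> b"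
  shows "(a-b)^2 \<le> 4*(a+b)*Gap a b"
proof (cases "a + b = 0")
  case True then show ?thesis using assms by simp
next
  case False
  define m where "m = (a+b)/2"
  define t where "t = (a-b)/(a+b)"
  have m: "m > 0" using False assms m_def by simp
  have s: "a+b > 0" using False assms by simp
  have tt: "(a+b)*t = a-b" unfolding t_def using s by simp
  have a: "a = m*(1+t)" unfolding m_def using tt by (simp add: field_simps)
  have b: "b = m*(1-t)" unfolding m_def using tt by (simp add: field_simps)
  have ab: "\<bar>a-b\<bar> \<le> a+b" using assms by linarith
  have t1: "\<bar>t\<bar> \<le> 1" unfolding t_def using s ab by (simp add: abs_divide)
  have la: "a * ln a = m*(1+t)*ln m + m*((1+t)*ln(1+t))"
  proof (cases "1+t = 0")
    case True then show ?thesis by (simp add: a)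
  next
    case False then have "1+t > 0" using t1 by auto
    then have lnA: "ln a = ln m + ln (1+t)" using m by (simp add: a ln_mult)
    have "a * ln a = (m*(1+t)) * (ln m + ln(1+t))" by (simp only: lnA) (simp only: a)
    then show ?thesis by (simp add: algebra_simps)
  qed
  have lb: "b * ln b = m*(1-t)*ln m + m*((1-t)*ln(1-t))"
  proof (cases "1-t = 0")
    case True then show ?thesis by (simp add: b)
  next
    case False then have "1-t > 0" using t1 by auto
    then have lnB: "ln b = ln m + ln (1-t)" using m by (simp add: b ln_mult)
    have "b * ln b = (m*(1-t)) * (ln m + ln(1-t))" by (simp only: lnB) (simp only: b)
    then show ?thesis by (simp add: algebra_simps)
  qed
  have G: "Gap a b = m/2 * ((1+t)*ln(1+t) + (1-t)*ln(1-t))"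
  proof -
    have s1: "a*ln a + b*ln b = 2*(m*ln m) + m*((1+t)*ln(1+t) + (1-t)*ln(1-t))"
      unfolding la lb by (simp add: algebra_simps)
    show ?thesis unfolding Gap_def m_def[symmetric] s1 by (simp add: add_divide_distrib)
  qed
  have "m/2 * t^2 \<le> Gap a b" unfolding G using psi_pos_all[OF t1] m
    by (intro mult_left_mono) auto
  moreover have "0 \<le> 4*(a+b)" using s by simp
  ultimately have calc: "4*(a+b)*(m/2 * t^2) \<le> 4*(a+b)*Gap a b" by (rule mult_left_mono)
  have eq: "4*(a+b)*(m/2*t^2) = ((a+b)*t)^2" unfolding m_def by (simp add: power2_eq_square algebra_simps)
  have "((a+b)*t)^2 \<le> 4*(a+b)*Gap a b" using calc eq by linarith
  then show ?thesis by (simp only: tt)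
qed

lemma gap_abs:
  fixes a b l :: real assumes "0 \<le> a" "0 \<le> b" "l > 0"
  shows "\<bar>a-b\<bar> \<le> 2*Gap a b/l + l*(a+b)/2"
proof (cases "a + b = 0")
  case True then have "a = 0" "b = 0" using assms by auto
  then show ?thesis by (simp add: Gap_def)
next
  case False
  then have s: "a+b > 0" using assms by simp
  have z: "(\<bar>a-b\<bar> - l*(a+b))^2 \<ge> 0" by simp
  have e0: "(x - y)^2 = x^2 + y^2 - 2*x*y" for x y :: real by (simp add: power2_diff)
  have e2: "(\<bar>a-b\<bar>)^2 = (a-b)^2" by simp
  have e3: "(l*(a+b))^2 = l^2*(a+b)^2" by (simp add: power_mult_distrib)
  have e4: "2*\<bar>a-b\<bar>*(l*(a+b)) = 2*l*(a+b)*\<bar>a-b\<bar>" by (simp add: mult_ac)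
  have e1: "(\<bar>a-b\<bar> - l*(a+b))^2 = (a-b)^2 + l^2*(a+b)^2 - 2*l*(a+b)*\<bar>a-b\<bar>"
    using e0[of "\<bar>a-b\<bar>" "l*(a+b)"] e2 e3 e4 by linarith
  have "2*l*(a+b)*\<bar>a-b\<bar> \<le> (a-b)^2 + l^2*(a+b)^2" using z e1 by linarith
  also have "\<dots> \<le> 4*(a+b)*Gap a b + l^2*(a+b)^2" using gap_sq[OF assms(1,2)] by simp
  finally have prev: "2*l*(a+b)*\<bar>a-b\<bar> \<le> 4*(a+b)*Gap a b + l^2*(a+b)^2" .
  have q1: "(a+b)*(2*l)*(2*Gap a b/l) = 4*(a+b)*Gap a b" using assms by simp
  have q2: "(a+b)*(2*l)*(l*(a+b)/2) = l^2*(a+b)^2" by (simp add: power2_eq_square)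
  have eq: "(a+b)*(2*l)*(2*Gap a b/l + l*(a+b)/2) = 4*(a+b)*Gap a b + l^2*(a+b)^2"
    using distrib_left[of "(a+b)*(2*l)" "2*Gap a b/l" "l*(a+b)/2"] q1 q2 by linarith
  have h1: "(a+b)*(2*l)*\<bar>a-b\<bar> = 2*l*(a+b)*\<bar>a-b\<bar>" by (simp add: algebra_simps)
  have "(a+b)*(2*l)*\<bar>a-b\<bar> \<le> (a+b)*(2*l)*(2*Gap a b/l + l*(a+b)/2)"
    using prev eq h1 by linarith
  moreover have "(a+b)*(2*l) > 0" using s assms by simp
  ultimately show ?thesis by (rule mult_left_le_imp_le)
qed




locale ot =
  fixes Mm Mp :: "'a::euclidean_space measure" and c :: "'a \<times> 'a \<Rightarrow> real"
  assumes Mm_prob: "prob_space Mm" and Mm_sets: "sets Mm = sets borel"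
    and Mp_prob: "prob_space Mp" and Mp_sets: "sets Mp = sets borel"
    and cpt1: "compact (mu_support Mm)" and cpt2: "compact (mu_support Mp)"
    and cont: "continuous_on (mu_support Mm \<times> mu_support Mp) c"
begin

abbreviation "PP \<equiv> Mm \<Otimes>\<^sub>M Mp"

lemma sets_PP: "sets PP = sets borel"
proof -
  have "sets PP = sets (borel \<Otimes>\<^sub>M borel)" by (rule sets_pair_measure_cong[OF Mm_sets Mp_sets])
  then show ?thesis by (metis borel_prod)
qed

lemma space_PP[simp]: "space PP = UNIV"
  using sets_eq_imp_space_eq[OF sets_PP] by simp

lemma space_Mm[simp]: "space Mm = UNIV"
  using sets_eq_imp_space_eq[OF Mm_sets] by simp

lemma space_Mp[simp]: "space Mp = UNIV"
  using sets_eq_imp_space_eq[OF Mp_sets] by simp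

lemma vimage_fst: "fst -` A = A \<times> UNIV" by auto
lemma vimage_snd: "snd -` A = UNIV \<times> A" by auto

lemma UNIV_borel: "UNIV \<in> sets (borel :: 'b::topological_space measure)"
  by (metis sets.top space_borel)

lemma times_in_PP: "A \<in> sets borel \<Longrightarrow> B \<in> sets borel \<Longrightarrow> A \<times> B \<in> sets PP"
  by (rule pair_measureI) (simp_all add: Mm_sets Mp_sets)

lemma UNIV_in_PP[simp]: "UNIV \<in> sets PP"
  using sets.top[of PP] by simp

lemma meas_PP: "borel_measurable PP = borel_measurable borel"
  by (rule measurable_cong_sets[OF sets_PP refl])

lemma prob_PP: "prob_space PP" by (rule prob_space_pair[OF Mm_prob Mp_prob])

sublocale P: prob_space "Mm \<Otimes>\<^sub>M Mp" by (rule prob_PP)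
sublocale M1: prob_space Mm by (rule Mm_prob)
sublocale M2: prob_space Mp by (rule Mp_prob)

definition K where "K = mu_support Mm \<times> mu_support Mp"
definition cc where "cc z = indicator K z * c z"

lemma K_compact: "compact K" unfolding K_def using cpt1 cpt2 by (rule compact_Times)

lemma cc_meas[measurable]: "cc \<in> borel_measurable PP"
proof -
  have "K \<in> sets borel" using K_compact by (simp add: compact_imp_closed borel_closed)
  then have "(\<lambda>z. indicator K z *\<^sub>R c z) \<in> borel_measurable borel"
    using cont[folded K_def] by (rule borel_measurable_continuous_on_indicator)
  then show ?thesis unfolding meas_PP cc_def by simp
qed

lemma cc_bound_ex: "\<exists>B>0. \<forall>z. \<bar>cc z\<bar> \<le> B"
proof -
  have "compact (c ` K)" using cont[folded K_def] K_compact by (rule compact_continuous_image)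
  then have "bounded (c ` K)" by (rule compact_imp_bounded)
  then obtain B where B: "B > 0" "\<And>x. x \<in> c ` K \<Longrightarrow> norm x \<le> B" by (auto simp: bounded_pos)
  have "\<bar>cc z\<bar> \<le> B" for z
    using B by (cases "z \<in> K") (auto simp: cc_def)
  then show ?thesis using B(1) by blast
qed

definition Bc where "Bc = (SOME B. B > 0 \<and> (\<forall>z. \<bar>cc z\<bar> \<le> B))"

lemma Bc_both: "Bc > 0 \<and> (\<forall>z. \<bar>cc z\<bar> \<le> Bc)"
  unfolding Bc_def by (rule someI_ex[OF cc_bound_ex])

lemma Bc: "Bc > 0" "\<bar>cc z\<bar> \<le> Bc"
  using Bc_both by blast+

lemma cost_eq: "sets \<gamma> = sets PP \<Longrightarrow> ot_cost Mm Mp c \<gamma> = (\<integral>z. cc z \<partial>\<gamma>)"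
  unfolding ot_cost_def set_lebesgue_integral_def K_def[symmetric] cc_def by simp

definition dens :: "('a \<times> 'a \<Rightarrow> real) \<Rightarrow> ('a \<times> 'a) measure" where
  "dens \<rho> = density PP (\<lambda>z. ennreal (\<rho> z))"

definition margs :: "('a \<times> 'a \<Rightarrow> real) \<Rightarrow> bool" where
  "margs \<rho> \<longleftrightarrow> (\<forall>A\<in>sets borel. (\<integral>z. \<rho> z * indicator (A \<times> UNIV) z \<partial>PP) = measure Mm A) \<and>
                 (\<forall>A\<in>sets borel. (\<integral>z. \<rho> z * indicator (UNIV \<times> A) z \<partial>PP) = measure Mp A)"

definition adm :: "('a \<times> 'a \<Rightarrow> real) \<Rightarrow> bool" where
  "adm \<rho> \<longleftrightarrow> \<rho> \<in> borel_measurable PP \<and> (\<forall>z. 0 \<le> \<rho> z) \<and> integrable PP \<rho> \<and> margs \<rho> \<and>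
              integrable PP (\<lambda>z. \<rho> z * ln (\<rho> z))"

definition H where "H \<rho> = (\<integral>z. \<rho> z * ln (\<rho> z) \<partial>PP)"
definition Cst where "Cst \<rho> = (\<integral>z. \<rho> z * cc z \<partial>PP)"
definition dd :: "('a \<times> 'a \<Rightarrow> real) \<Rightarrow> ('a \<times> 'a \<Rightarrow> real) \<Rightarrow> real" where "dd \<rho> \<sigma> = (\<integral>z. \<bar>\<rho> z - \<sigma> z\<bar> \<partial>PP)"

lemma sets_dens[simp]: "sets (dens \<rho>) = sets PP" unfolding dens_def by simp
lemma space_dens[simp]: "space (dens \<rho>) = UNIV" unfolding dens_def by simp

lemma em_dens:
  assumes "\<rho> \<in> borel_measurable PP" "\<forall>z. 0 \<le> \<rho> z" "integrable PP \<rho>" "S \<in> sets PP"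
  shows "emeasure (dens \<rho>) S = ennreal (\<integral>z. \<rho> z * indicator S z \<partial>PP)"
proof -
  have "emeasure (dens \<rho>) S = (\<integral>\<^sup>+z. ennreal (\<rho> z) * indicator S z \<partial>PP)"
    unfolding dens_def using assms by (simp add: emeasure_density)
  also have "\<dots> = (\<integral>\<^sup>+z. ennreal (\<rho> z * indicator S z) \<partial>PP)"
    by (intro nn_integral_cong) (auto simp: indicator_def)
  also have "\<dots> = ennreal (\<integral>z. \<rho> z * indicator S z \<partial>PP)"
    using assms by (intro nn_integral_eq_integral) (auto intro!: integrable_real_mult_indicator)
  finally show ?thesis .
qed

lemma margs_one: "margs \<rho> \<Longrightarrow> (\<integral>z. \<rho> z \<partial>PP) = 1"
proof -
  assume "margs \<rho>"
  then have "(\<integral>z. \<rho> z * indicator (UNIV \<times> UNIV) z \<partial>PP) = measure Mm UNIV"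
    unfolding margs_def using UNIV_borel by blast
  moreover have "measure Mm UNIV = 1" using prob_space.prob_space[OF Mm_prob] by simp
  ultimately show ?thesis by simp
qed

lemma dens_coupling:
  assumes m: "\<rho> \<in> borel_measurable PP" and nn: "\<forall>z. 0 \<le> \<rho> z" and int: "integrable PP \<rho>"
    and mg: "margs \<rho>"
  shows "dens \<rho> \<in> couplings Mm Mp"
proof -
  have em: "emeasure (dens \<rho>) S = ennreal (\<integral>z. \<rho> z * indicator S z \<partial>PP)" if "S \<in> sets PP" for S
    using em_dens[OF m nn int that] .
  have "emeasure (dens \<rho>) (space (dens \<rho>)) = 1"
    using em[of UNIV] margs_one[OF mg] by simp
  then have prob: "prob_space (dens \<rho>)" by (rule prob_spaceI)
  have fstm: "fst \<in> measurable (dens \<rho>) Mm"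
    using measurable_cong_sets[OF sets_dens[of \<rho>] refl, of Mm] measurable_fst[of Mm Mp] by simp
  have sndm: "snd \<in> measurable (dens \<rho>) Mp"
    using measurable_cong_sets[OF sets_dens[of \<rho>] refl, of Mp] measurable_snd[of Mm Mp] by simp
  have d1: "distr (dens \<rho>) Mm fst = Mm"
  proof (rule measure_eqI)
    fix A assume A: "A \<in> sets (distr (dens \<rho>) Mm fst)"
    then have A': "A \<in> sets borel" using Mm_sets by simp
    have "A \<times> UNIV \<in> sets PP" using A' UNIV_borel by (intro times_in_PP)
    then have "emeasure (distr (dens \<rho>) Mm fst) A = emeasure (dens \<rho>) (A \<times> UNIV)"
      using A fstm by (simp add: emeasure_distr vimage_fst vimage_snd)
    also have "\<dots> = ennreal (measure Mm A)" using em[OF \<open>A \<times> UNIV \<in> sets PP\<close>] mg A' unfolding margs_def by simp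
    also have "\<dots> = emeasure Mm A" using M1.emeasure_eq_measure by simp
    finally show "emeasure (distr (dens \<rho>) Mm fst) A = emeasure Mm A" .
  qed simp
  have d2: "distr (dens \<rho>) Mp snd = Mp"
  proof (rule measure_eqI)
    fix A assume A: "A \<in> sets (distr (dens \<rho>) Mp snd)"
    then have A': "A \<in> sets borel" using Mp_sets by simp
    have "UNIV \<times> A \<in> sets PP" using A' UNIV_borel by (intro times_in_PP)
    then have "emeasure (distr (dens \<rho>) Mp snd) A = emeasure (dens \<rho>) (UNIV \<times> A)"
      using A sndm by (simp add: emeasure_distr vimage_fst vimage_snd)
    also have "\<dots> = ennreal (measure Mp A)" using em[OF \<open>UNIV \<times> A \<in> sets PP\<close>] mg A' unfolding margs_def by simp
    also have "\<dots> = emeasure Mp A" using M2.emeasure_eq_measure by simp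
    finally show "emeasure (distr (dens \<rho>) Mp snd) A = emeasure Mp A" .
  qed simp
  show ?thesis unfolding couplings_def using prob d1 d2 by simp
qed

lemma coupling_margs:
  assumes g: "dens \<rho> \<in> couplings Mm Mp" and m: "\<rho> \<in> borel_measurable PP" and nn: "\<forall>z. 0 \<le> \<rho> z"
  shows "integrable PP \<rho> \<and> margs \<rho>"
proof -
  have prob: "prob_space (dens \<rho>)" using g unfolding couplings_def by simp
  have "(\<integral>\<^sup>+z. ennreal (\<rho> z) \<partial>PP) = emeasure (dens \<rho>) UNIV"
    unfolding dens_def using m by (simp add: emeasure_density)
  also have "\<dots> = 1" using prob_space.emeasure_space_1[OF prob] by simp
  finally have int: "integrable PP \<rho>" using m nn by (intro integrableI_nonneg) auto
  have em: "emeasure (dens \<rho>) S = ennreal (\<integral>z. \<rho> z * indicator S z \<partial>PP)" if "S \<in> sets PP" for S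
    using em_dens[OF m nn int that] .
  have fstm: "fst \<in> measurable (dens \<rho>) Mm"
    using measurable_cong_sets[OF sets_dens[of \<rho>] refl, of Mm] measurable_fst[of Mm Mp] by simp
  have sndm: "snd \<in> measurable (dens \<rho>) Mp"
    using measurable_cong_sets[OF sets_dens[of \<rho>] refl, of Mp] measurable_snd[of Mm Mp] by simp
  have nni: "(\<integral>z. \<rho> z * indicator S z \<partial>PP) \<ge> 0" for S
    using nn by (intro integral_nonneg_AE) (auto simp: indicator_def)
  have m1: "(\<integral>z. \<rho> z * indicator (A \<times> UNIV) z \<partial>PP) = measure Mm A" if A: "A \<in> sets borel" for A
  proof -
    have A2: "A \<in> sets Mm" using A Mm_sets by simp
    have "A \<times> UNIV \<in> sets PP" using A UNIV_borel by (intro times_in_PP)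
    have "emeasure Mm A = emeasure (distr (dens \<rho>) Mm fst) A" using g unfolding couplings_def by simp
    also have "\<dots> = emeasure (dens \<rho>) (A \<times> UNIV)"
      using A2 fstm by (simp add: emeasure_distr vimage_fst vimage_snd)
    also have "\<dots> = ennreal (\<integral>z. \<rho> z * indicator (A \<times> UNIV) z \<partial>PP)" using em[OF \<open>A \<times> UNIV \<in> sets PP\<close>] .
    finally have "ennreal (measure Mm A) = ennreal (\<integral>z. \<rho> z * indicator (A \<times> UNIV) z \<partial>PP)"
      using M1.emeasure_eq_measure by simp
    then show ?thesis using nni by (simp add: ennreal_inj)
  qed
  have m2: "(\<integral>z. \<rho> z * indicator (UNIV \<times> A) z \<partial>PP) = measure Mp A" if A: "A \<in> sets borel" for A
  proof -
    have A2: "A \<in> sets Mp" using A Mp_sets by simp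
    have "UNIV \<times> A \<in> sets PP" using A UNIV_borel by (intro times_in_PP)
    have "emeasure Mp A = emeasure (distr (dens \<rho>) Mp snd) A" using g unfolding couplings_def by simp
    also have "\<dots> = emeasure (dens \<rho>) (UNIV \<times> A)"
      using A2 sndm by (simp add: emeasure_distr vimage_fst vimage_snd)
    also have "\<dots> = ennreal (\<integral>z. \<rho> z * indicator (UNIV \<times> A) z \<partial>PP)" using em[OF \<open>UNIV \<times> A \<in> sets PP\<close>] .
    finally have "ennreal (measure Mp A) = ennreal (\<integral>z. \<rho> z * indicator (UNIV \<times> A) z \<partial>PP)"
      using M2.emeasure_eq_measure by simp
    then show ?thesis using nni by (simp add: ennreal_inj)
  qed
  show ?thesis using int m1 m2 unfolding margs_def by blast
qed

lemma adm_coupling: "adm \<rho> \<Longrightarrow> dens \<rho> \<in> couplings Mm Mp"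
  unfolding adm_def using dens_coupling by blast

lemma rel_ent_dens:
  assumes "adm \<rho>"
  shows "rel_ent (dens \<rho>) PP = ereal (H \<rho>)"
proof -
  have m: "\<rho> \<in> borel_measurable PP" and nn: "\<forall>z. 0 \<le> \<rho> z"
    and il: "integrable PP (\<lambda>z. \<rho> z * ln (\<rho> z))" using assms unfolding adm_def by auto
  have "AE z in PP. ennreal (\<rho> z) = RN_deriv PP (dens \<rho>) z"
    using m by (intro P.RN_deriv_unique) (auto simp: dens_def)
  then have ae: "AE z in PP. enn2real (RN_deriv PP (dens \<rho>) z) = \<rho> z"
    by eventually_elim (metis enn2real_ennreal nn)
  then have ae2: "AE z in PP. enn2real (RN_deriv PP (dens \<rho>) z) * ln (enn2real (RN_deriv PP (dens \<rho>) z))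
       = \<rho> z * ln (\<rho> z)" by eventually_elim simp
  have i2: "integrable PP (\<lambda>z. enn2real (RN_deriv PP (dens \<rho>) z) * ln (enn2real (RN_deriv PP (dens \<rho>) z)))"
    using il ae2 m by (subst integrable_cong_AE[OF _ _ ae2]) auto
  have e2: "(\<integral>z. enn2real (RN_deriv PP (dens \<rho>) z) * ln (enn2real (RN_deriv PP (dens \<rho>) z)) \<partial>PP) = H \<rho>"
    unfolding H_def by (rule integral_cong_AE) (use ae2 m in auto)
  have ac: "absolutely_continuous PP (dens \<rho>)" unfolding dens_def using m
    by (intro absolutely_continuousI_density) auto
  show ?thesis unfolding rel_ent_def using ac i2 e2 by simp
qed

lemma finite_ent_dens:
  assumes g: "\<gamma> \<in> couplings Mm Mp" and f: "rel_ent \<gamma> PP \<noteq> \<infinity>"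
  shows "\<exists>\<rho>. adm \<rho> \<and> \<gamma> = dens \<rho>"
proof -
  define \<rho> where "\<rho> z = enn2real (RN_deriv PP \<gamma> z)" for z
  have c: "sets \<gamma> = sets PP" "absolutely_continuous PP \<gamma>"
    and il: "integrable PP (\<lambda>z. \<rho> z * ln (\<rho> z))"
    using f unfolding rel_ent_def \<rho>_def by (auto split: if_splits)
  have prob: "prob_space \<gamma>" using g unfolding couplings_def by simp
  then have sf: "sigma_finite_measure \<gamma>"
    by (simp add: prob_space_imp_sigma_finite)
  have "AE z in PP. RN_deriv PP \<gamma> z \<noteq> \<infinity>" using P.RN_deriv_finite[OF sf c(2) c(1)] .
  then have ae: "AE z in PP. RN_deriv PP \<gamma> z = ennreal (\<rho> z)"
    by eventually_elim (auto simp: \<rho>_def less_top)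
  have m: "\<rho> \<in> borel_measurable PP" unfolding \<rho>_def by simp
  have "\<gamma> = density PP (RN_deriv PP \<gamma>)" using P.density_RN_deriv[OF c(2) c(1)] by simp
  also have "\<dots> = dens \<rho>" unfolding dens_def using ae m by (intro density_cong) auto
  finally have eq: "\<gamma> = dens \<rho>" .
  have nn: "\<forall>z. 0 \<le> \<rho> z" unfolding \<rho>_def by simp
  have "integrable PP \<rho> \<and> margs \<rho>" using coupling_margs[OF g[unfolded eq] m nn] .
  then show ?thesis using eq m nn il unfolding adm_def by blast
qed

lemma H_nonneg: assumes "adm \<rho>" shows "H \<rho> \<ge> 0"
proof -
  have m: "\<rho> \<in> borel_measurable PP" and nn: "\<forall>z. 0 \<le> \<rho> z" and i: "integrable PP \<rho>"
    and il: "integrable PP (\<lambda>z. \<rho> z * ln (\<rho> z))" and mg: "margs \<rho>" using assms unfolding adm_def by auto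
  have "(\<integral>z. \<rho> z - 1 \<partial>PP) \<le> H \<rho>" unfolding H_def
    using i il nn xlnx_ge by (intro integral_mono) auto
  moreover have "(\<integral>z. \<rho> z - 1 \<partial>PP) = 0"
    using i margs_one[OF mg] P.prob_space by simp
  ultimately show ?thesis by simp
qed

lemma int_bounded_mult:
  fixes \<rho> f :: "'a \<times> 'a \<Rightarrow> real"
  assumes i: "integrable PP \<rho>" and f: "f \<in> borel_measurable PP" and b: "\<And>z. \<bar>f z\<bar> \<le> B"
  shows "integrable PP (\<lambda>z. \<rho> z * f z)"
proof (rule Bochner_Integration.integrable_bound[where f="\<lambda>z. B * \<rho> z"])
  show "integrable PP (\<lambda>z. B * \<rho> z)" using i by simp
  show "(\<lambda>z. \<rho> z * f z) \<in> borel_measurable PP" using i f by (simp add: borel_measurable_integrable)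
  show "AE z in PP. norm (\<rho> z * f z) \<le> norm (B * \<rho> z)"
  proof (rule AE_I2)
    fix z
    have "\<bar>\<rho> z * f z\<bar> = \<bar>\<rho> z\<bar> * \<bar>f z\<bar>" by (simp add: abs_mult)
    also have "\<dots> \<le> \<bar>\<rho> z\<bar> * \<bar>B\<bar>" using b[of z] by (intro mult_left_mono) auto
    finally show "norm (\<rho> z * f z) \<le> norm (B * \<rho> z)" by (simp add: abs_mult mult.commute)
  qed
qed

lemma cost_dens: assumes "adm \<rho>" shows "ot_cost Mm Mp c (dens \<rho>) = Cst \<rho>"
proof -
  have m: "\<rho> \<in> borel_measurable PP" and nn: "\<forall>z. 0 \<le> \<rho> z" using assms unfolding adm_def by auto
  have "ot_cost Mm Mp c (dens \<rho>) = (\<integral>z. cc z \<partial>dens \<rho>)" by (rule cost_eq) simp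
  also have "\<dots> = (\<integral>z. \<rho> z * cc z \<partial>PP)" unfolding dens_def
    using m nn by (subst integral_density) auto
  finally show ?thesis unfolding Cst_def .
qed

lemma int_diff_bound:
  fixes \<rho> \<sigma> f :: "'a \<times> 'a \<Rightarrow> real"
  assumes i1: "integrable PP \<rho>" and i2: "integrable PP \<sigma>" and f: "f \<in> borel_measurable PP"
    and b: "\<And>z. \<bar>f z\<bar> \<le> B"
  shows "\<bar>(\<integral>z. \<rho> z * f z \<partial>PP) - (\<integral>z. \<sigma> z * f z \<partial>PP)\<bar> \<le> B * dd \<rho> \<sigma>"
proof -
  have j1: "integrable PP (\<lambda>z. \<rho> z * f z)" by (rule int_bounded_mult[OF i1 f b])
  have j2: "integrable PP (\<lambda>z. \<sigma> z * f z)" by (rule int_bounded_mult[OF i2 f b])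
  have "(\<integral>z. \<rho> z * f z \<partial>PP) - (\<integral>z. \<sigma> z * f z \<partial>PP) = (\<integral>z. (\<rho> z - \<sigma> z) * f z \<partial>PP)"
    using Bochner_Integration.integral_diff[OF j1 j2] by (simp add: left_diff_distrib)
  also have "\<bar>\<dots>\<bar> \<le> (\<integral>z. \<bar>(\<rho> z - \<sigma> z) * f z\<bar> \<partial>PP)" by (rule integral_abs_bound)
  also have "\<dots> \<le> (\<integral>z. B * \<bar>\<rho> z - \<sigma> z\<bar> \<partial>PP)"
  proof (rule integral_mono)
    show "integrable PP (\<lambda>z. \<bar>(\<rho> z - \<sigma> z) * f z\<bar>)" using j1 j2 by (simp add: left_diff_distrib)
    show "integrable PP (\<lambda>z. B * \<bar>\<rho> z - \<sigma> z\<bar>)" using i1 i2 by simp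
    fix z show "\<bar>(\<rho> z - \<sigma> z) * f z\<bar> \<le> B * \<bar>\<rho> z - \<sigma> z\<bar>"
    proof -
      have "\<bar>\<rho> z - \<sigma> z\<bar> * \<bar>f z\<bar> \<le> \<bar>\<rho> z - \<sigma> z\<bar> * B" using b[of z] by (intro mult_left_mono) auto
      then show ?thesis by (simp add: abs_mult mult.commute)
    qed
  qed
  also have "\<dots> = B * dd \<rho> \<sigma>" unfolding dd_def by simp
  finally show ?thesis .
qed

lemma Cst_diff: "adm \<rho> \<Longrightarrow> adm \<sigma> \<Longrightarrow> \<bar>Cst \<rho> - Cst \<sigma>\<bar> \<le> Bc * dd \<rho> \<sigma>"
  unfolding Cst_def adm_def by (intro int_diff_bound) (auto simp: Bc)

lemma Cst_bound: "adm \<rho> \<Longrightarrow> \<bar>Cst \<rho>\<bar> \<le> Bc"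
proof -
  assume a: "adm \<rho>"
  have i: "integrable PP \<rho>" and nn: "\<forall>z. 0 \<le> \<rho> z" and mg: "margs \<rho>" using a unfolding adm_def by auto
  have "\<bar>Cst \<rho>\<bar> \<le> (\<integral>z. \<bar>\<rho> z * cc z\<bar> \<partial>PP)" unfolding Cst_def by (rule integral_abs_bound)
  also have "\<dots> \<le> (\<integral>z. Bc * \<rho> z \<partial>PP)"
  proof (rule integral_mono)
    show "integrable PP (\<lambda>z. \<bar>\<rho> z * cc z\<bar>)" using int_bounded_mult[OF i cc_meas Bc(2)] by simp
    show "integrable PP (\<lambda>z. Bc * \<rho> z)" using i by simp
    fix z
    have r: "\<rho> z \<ge> 0" using nn by blast
    have "\<bar>\<rho> z * cc z\<bar> = \<rho> z * \<bar>cc z\<bar>" using r by (simp add: abs_mult)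
    also have "\<dots> \<le> \<rho> z * Bc" using r Bc(2)[of z] by (rule mult_left_mono[rotated])
    finally show "\<bar>\<rho> z * cc z\<bar> \<le> Bc * \<rho> z" by (simp add: mult.commute)
  qed
  also have "\<dots> = Bc" using margs_one[OF mg] by simp
  finally show ?thesis .
qed

lemma dd_nonneg: "dd \<rho> \<sigma> \<ge> 0" unfolding dd_def by (intro integral_nonneg_AE) auto

end



lemma xlnx_right0: "((\<lambda>x::real. x * ln x) \<longlongrightarrow> 0) (at_right 0)"
  by real_asymp

lemma xlnx_tendsto:
  fixes y :: "nat \<Rightarrow> real"
  assumes nn: "\<And>i. 0 \<le> y i" and lim: "y \<longlonglongrightarrow> a"
  shows "(\<lambda>i. y i * ln (y i)) \<longlonglongrightarrow> a * ln a"
proof -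
  have a0: "a \<ge> 0" using nn lim by (intro LIMSEQ_le_const) auto
  have cont: "continuous (at a within {0..}) (\<lambda>x::real. x * ln x)"
  proof (cases "a = 0")
    case True
    have eq: "at (0::real) within {0..} = at_right 0"
      unfolding at_within_def by (rule arg_cong[where f="\<lambda>S. inf (nhds 0) (principal S)"]) auto
    show ?thesis unfolding True continuous_within eq using xlnx_right0 by simp
  next
    case False
    then have "a > 0" using a0 by simp
    then have "isCont (\<lambda>x::real. x * ln x) a" by (auto intro!: continuous_intros)
    then show ?thesis by (rule continuous_at_imp_continuous_within)
  qed
  show ?thesis using continuous_within_tendsto_compose'[OF cont _ lim] nn by auto
qed

lemma gap_nonneg: fixes a b :: real assumes "0 \<le> a" "0 \<le> b" shows "Gap a b \<ge> 0"
proof (cases "a + b = 0")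
  case True then have "a = 0" "b = 0" using assms by auto
  then show ?thesis by (simp add: Gap_def)
next
  case False
  then have s: "a + b > 0" using assms by simp
  show ?thesis
  proof (rule ccontr)
    assume "\<not> Gap a b \<ge> 0"
    then have "4*(a+b)*Gap a b < 0" using s by (simp add: mult_pos_neg)
    moreover have "(a-b)^2 \<ge> 0" by simp
    ultimately show False using gap_sq[OF assms] by linarith
  qed
qed

context ot begin

definition mid :: "('a \<times> 'a \<Rightarrow> real) \<Rightarrow> ('a \<times> 'a \<Rightarrow> real) \<Rightarrow> 'a \<times> 'a \<Rightarrow> real" where
  "mid \<rho> \<sigma> = (\<lambda>z. (\<rho> z + \<sigma> z)/2)"

lemma adm_mid:
  assumes r: "adm \<rho>" and s: "adm \<sigma>"
  shows "adm (mid \<rho> \<sigma>)"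
proof -
  have mr: "\<rho> \<in> borel_measurable PP" and nr: "\<forall>z. 0 \<le> \<rho> z" and ir: "integrable PP \<rho>" and gr: "margs \<rho>"
    and lr: "integrable PP (\<lambda>z. \<rho> z * ln (\<rho> z))" using r unfolding adm_def by auto
  have ms: "\<sigma> \<in> borel_measurable PP" and ns: "\<forall>z. 0 \<le> \<sigma> z" and iS: "integrable PP \<sigma>" and gs: "margs \<sigma>"
    and ls: "integrable PP (\<lambda>z. \<sigma> z * ln (\<sigma> z))" using s unfolding adm_def by auto
  have m: "mid \<rho> \<sigma> \<in> borel_measurable PP" unfolding mid_def using mr ms by measurable
  have n: "\<forall>z. 0 \<le> mid \<rho> \<sigma> z" unfolding mid_def using nr ns by (simp add: add_nonneg_nonneg)
  have i: "integrable PP (mid \<rho> \<sigma>)" unfolding mid_def using ir iS by simp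
  have ind: "(\<integral>z. mid \<rho> \<sigma> z * indicator S z \<partial>PP) =
      ((\<integral>z. \<rho> z * indicator S z \<partial>PP) + (\<integral>z. \<sigma> z * indicator S z \<partial>PP))/2" if "S \<in> sets PP" for S
  proof -
    have a: "integrable PP (\<lambda>z. \<rho> z * indicator S z)" using ir that by (rule integrable_real_mult_indicator[rotated])
    have b: "integrable PP (\<lambda>z. \<sigma> z * indicator S z)" using iS that by (rule integrable_real_mult_indicator[rotated])
    have "(\<integral>z. mid \<rho> \<sigma> z * indicator S z \<partial>PP) = (\<integral>z. (\<rho> z * indicator S z + \<sigma> z * indicator S z)/2 \<partial>PP)"
      unfolding mid_def by (simp add: algebra_simps add_divide_distrib)
    also have "\<dots> = ((\<integral>z. \<rho> z * indicator S z \<partial>PP) + (\<integral>z. \<sigma> z * indicator S z \<partial>PP))/2"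
      using a b by simp
    finally show ?thesis .
  qed
  have g: "margs (mid \<rho> \<sigma>)"
    using gr gs unfolding margs_def
    by (simp add: ind times_in_PP UNIV_borel)
  have gapb: "mid \<rho> \<sigma> z * ln (mid \<rho> \<sigma> z) \<le> (\<rho> z * ln (\<rho> z) + \<sigma> z * ln (\<sigma> z))/2" for z
    using gap_nonneg[of "\<rho> z" "\<sigma> z"] nr ns unfolding Gap_def mid_def by auto
  have lowb: "mid \<rho> \<sigma> z * ln (mid \<rho> \<sigma> z) \<ge> mid \<rho> \<sigma> z - 1" for z
    using xlnx_ge n by blast
  have l: "integrable PP (\<lambda>z. mid \<rho> \<sigma> z * ln (mid \<rho> \<sigma> z))"
  proof (rule Bochner_Integration.integrable_bound[where f="\<lambda>z. mid \<rho> \<sigma> z + 1 + \<bar>\<rho> z * ln (\<rho> z)\<bar> + \<bar>\<sigma> z * ln (\<sigma> z)\<bar>"])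
    show "integrable PP (\<lambda>z. mid \<rho> \<sigma> z + 1 + \<bar>\<rho> z * ln (\<rho> z)\<bar> + \<bar>\<sigma> z * ln (\<sigma> z)\<bar>)"
      using i lr ls by simp
    show "(\<lambda>z. mid \<rho> \<sigma> z * ln (mid \<rho> \<sigma> z)) \<in> borel_measurable PP" using m by measurable
    show "AE z in PP. norm (mid \<rho> \<sigma> z * ln (mid \<rho> \<sigma> z))
        \<le> norm (mid \<rho> \<sigma> z + 1 + \<bar>\<rho> z * ln (\<rho> z)\<bar> + \<bar>\<sigma> z * ln (\<sigma> z)\<bar>)"
    proof (rule AE_I2)
      fix z
      have "0 \<le> mid \<rho> \<sigma> z" using n by blast
      then show "norm (mid \<rho> \<sigma> z * ln (mid \<rho> \<sigma> z))
        \<le> norm (mid \<rho> \<sigma> z + 1 + \<bar>\<rho> z * ln (\<rho> z)\<bar> + \<bar>\<sigma> z * ln (\<sigma> z)\<bar>)"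
        using gapb[of z] lowb[of z] by (simp add: abs_le_iff) linarith
    qed
  qed
  show ?thesis unfolding adm_def using m n i g l by blast
qed

lemma Cst_mid: assumes "adm \<rho>" "adm \<sigma>" shows "Cst (mid \<rho> \<sigma>) = (Cst \<rho> + Cst \<sigma>)/2"
proof -
  have a: "integrable PP (\<lambda>z. \<rho> z * cc z)" using assms(1) unfolding adm_def
    by (intro int_bounded_mult[OF _ cc_meas Bc(2)]) auto
  have b: "integrable PP (\<lambda>z. \<sigma> z * cc z)" using assms(2) unfolding adm_def
    by (intro int_bounded_mult[OF _ cc_meas Bc(2)]) auto
  have "Cst (mid \<rho> \<sigma>) = (\<integral>z. (\<rho> z * cc z + \<sigma> z * cc z)/2 \<partial>PP)"
    unfolding Cst_def mid_def by (simp add: algebra_simps add_divide_distrib)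
  also have "\<dots> = (Cst \<rho> + Cst \<sigma>)/2" unfolding Cst_def using a b by simp
  finally show ?thesis .
qed

lemma H_mid:
  assumes r: "adm \<rho>" and s: "adm \<sigma>"
  shows "H (mid \<rho> \<sigma>) \<le> (H \<rho> + H \<sigma>)/2 - (dd \<rho> \<sigma>)^2/8"
proof -
  have nr: "\<forall>z. 0 \<le> \<rho> z" and ir: "integrable PP \<rho>" and gr: "margs \<rho>"
    and lr: "integrable PP (\<lambda>z. \<rho> z * ln (\<rho> z))" using r unfolding adm_def by auto
  have ns: "\<forall>z. 0 \<le> \<sigma> z" and iS: "integrable PP \<sigma>" and gs: "margs \<sigma>"
    and ls: "integrable PP (\<lambda>z. \<sigma> z * ln (\<sigma> z))" using s unfolding adm_def by auto
  have lm: "integrable PP (\<lambda>z. mid \<rho> \<sigma> z * ln (mid \<rho> \<sigma> z))"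
    using adm_mid[OF r s] unfolding adm_def by auto
  define I where "I = (H \<rho> + H \<sigma>)/2 - H (mid \<rho> \<sigma>)"
  have gapeq: "Gap (\<rho> z) (\<sigma> z) = (\<rho> z * ln (\<rho> z) + \<sigma> z * ln (\<sigma> z))/2 - mid \<rho> \<sigma> z * ln (mid \<rho> \<sigma> z)" for z
    unfolding Gap_def mid_def ..
  have ig: "integrable PP (\<lambda>z. Gap (\<rho> z) (\<sigma> z))" unfolding gapeq using lr ls lm by simp
  have intG: "(\<integral>z. Gap (\<rho> z) (\<sigma> z) \<partial>PP) = I" unfolding gapeq I_def H_def using lr ls lm by simp
  have I0: "I \<ge> 0" unfolding intG[symmetric] using nr ns gap_nonneg
    by (intro integral_nonneg_AE) auto
  have one: "(\<integral>z. \<rho> z \<partial>PP) = 1" "(\<integral>z. \<sigma> z \<partial>PP) = 1" using margs_one gr gs by auto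
  have bound: "dd \<rho> \<sigma> \<le> 2*I/l + l" if l: "l > 0" for l
  proof -
    have "dd \<rho> \<sigma> \<le> (\<integral>z. 2*Gap (\<rho> z) (\<sigma> z)/l + l*(\<rho> z + \<sigma> z)/2 \<partial>PP)"
      unfolding dd_def
    proof (rule integral_mono)
      show "integrable PP (\<lambda>z. \<bar>\<rho> z - \<sigma> z\<bar>)" using ir iS by simp
      show "integrable PP (\<lambda>z. 2*Gap (\<rho> z) (\<sigma> z)/l + l*(\<rho> z + \<sigma> z)/2)" using ig ir iS by simp
      fix z show "\<bar>\<rho> z - \<sigma> z\<bar> \<le> 2*Gap (\<rho> z) (\<sigma> z)/l + l*(\<rho> z + \<sigma> z)/2"
        using gap_abs[of "\<rho> z" "\<sigma> z" l] nr ns l by blast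
    qed
    also have "\<dots> = 2*I/l + l*((\<integral>z. \<rho> z \<partial>PP) + (\<integral>z. \<sigma> z \<partial>PP))/2"
      using ig ir iS intG by (simp add: algebra_simps)
    also have "\<dots> = 2*I/l + l" using one by simp
    finally show ?thesis .
  qed
  have "(dd \<rho> \<sigma>)^2 \<le> 8*I"
  proof (cases "dd \<rho> \<sigma> = 0")
    case True then show ?thesis using I0 by simp
  next
    case False
    then have d: "dd \<rho> \<sigma> > 0" using dd_nonneg[of \<rho> \<sigma>] by simp
    have "dd \<rho> \<sigma> \<le> 2*I/(dd \<rho> \<sigma>/2) + dd \<rho> \<sigma>/2" using bound[of "dd \<rho> \<sigma>/2"] d by simp
    then have "dd \<rho> \<sigma>/2 \<le> 4*I/dd \<rho> \<sigma>" by simp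
    then have "dd \<rho> \<sigma>/2 * dd \<rho> \<sigma> \<le> 4*I" using d by (simp add: le_divide_eq)
    then show ?thesis by (simp add: power2_eq_square)
  qed
  then have "(dd \<rho> \<sigma>)^2/8 \<le> I" by simp
  then show ?thesis unfolding I_def by linarith
qed

end



lemma abs_le_lim0:
  fixes x :: real
  assumes "\<And>n. \<bar>x\<bar> \<le> a n" "a \<longlonglongrightarrow> 0"
  shows "x = 0"
proof -
  have "\<bar>x\<bar> \<le> 0" using assms by (intro LIMSEQ_le_const[OF assms(2)]) auto
  then show ?thesis by simp
qed

context ot begin

lemma prob_UNIV[simp]: "measure PP UNIV = 1"
  using P.prob_space by simp

lemma fatou_real:
  fixes u :: "nat \<Rightarrow> 'a \<times> 'a \<Rightarrow> real" and w :: "'a \<times> 'a \<Rightarrow> real"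
  assumes um[measurable]: "\<And>i. u i \<in> borel_measurable PP" and ui: "\<And>i. integrable PP (u i)"
    and un: "\<And>i z. 0 \<le> u i z" and wm: "w \<in> borel_measurable PP"
    and conv: "AE z in PP. (\<lambda>i. u i z) \<longlonglongrightarrow> w z"
    and bnd: "eventually (\<lambda>i. (\<integral>z. u i z \<partial>PP) \<le> C) sequentially"
  shows "integrable PP w \<and> (\<integral>z. w z \<partial>PP) \<le> C"
proof -
  have wn: "AE z in PP. 0 \<le> w z" using conv
    by eventually_elim (auto intro!: LIMSEQ_le_const un)
  obtain i where "(\<integral>z. u i z \<partial>PP) \<le> C" using bnd eventually_sequentially by auto
  moreover have "(\<integral>z. u i z \<partial>PP) \<ge> 0" using un by (intro integral_nonneg_AE) auto
  ultimately have C0: "C \<ge> 0" by simp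
  have "(\<integral>\<^sup>+z. ennreal (w z) \<partial>PP) = (\<integral>\<^sup>+z. liminf (\<lambda>i. ennreal (u i z)) \<partial>PP)"
  proof (rule nn_integral_cong_AE)
    show "AE z in PP. ennreal (w z) = liminf (\<lambda>i. ennreal (u i z))"
      using conv by eventually_elim (rule lim_imp_Liminf[symmetric]; auto)
  qed
  also have "\<dots> \<le> liminf (\<lambda>i. \<integral>\<^sup>+z. ennreal (u i z) \<partial>PP)"
    by (rule nn_integral_liminf) measurable
  also have "\<dots> = liminf (\<lambda>i. ennreal (\<integral>z. u i z \<partial>PP))"
    using nn_integral_eq_integral[OF ui] un by simp
  also have "\<dots> \<le> limsup (\<lambda>i. ennreal (\<integral>z. u i z \<partial>PP))"
    by (rule Liminf_le_Limsup) simp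
  also have "\<dots> \<le> ennreal C"
    by (rule Limsup_bounded) (use bnd in \<open>auto elim!: eventually_mono intro: ennreal_leI\<close>)
  finally have le: "(\<integral>\<^sup>+z. ennreal (w z) \<partial>PP) \<le> ennreal C" .
  then have iw: "integrable PP w" using wm wn
    by (intro integrableI_nonneg) (auto simp: le_less_trans[OF le])
  have "ennreal (\<integral>z. w z \<partial>PP) \<le> ennreal C" using le nn_integral_eq_integral[OF iw wn] by simp
  then have "(\<integral>z. w z \<partial>PP) \<le> C" using C0 by (simp add: ennreal_le_iff)
  then show ?thesis using iw by simp
qed

lemma adm_limit:
  fixes r :: "nat \<Rightarrow> 'a \<times> 'a \<Rightarrow> real"
  assumes adm: "\<And>n. adm (r n)"
    and cau: "\<And>e. e > 0 \<Longrightarrow> \<exists>N. \<forall>i\<ge>N. \<forall>j\<ge>N. dd (r i) (r j) < e"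
    and Hb: "\<And>n. H (r n) \<le> L n" and Lc: "L \<longlonglongrightarrow> Lm"
  shows "\<exists>\<rho>. adm \<rho> \<and> (\<lambda>n. dd (r n) \<rho>) \<longlonglongrightarrow> 0 \<and> H \<rho> \<le> Lm"
proof -
  have rm[measurable]: "\<And>n. r n \<in> borel_measurable PP" and rn: "\<And>n z. 0 \<le> r n z"
    and ri: "\<And>n. integrable PP (r n)"
    and rg: "\<And>n. margs (r n)" and rl: "\<And>n. integrable PP (\<lambda>z. r n z * ln (r n z))"
    using adm unfolding adm_def by auto
  have cau': "\<exists>N. \<forall>i\<ge>N. \<forall>j\<ge>N. (LINT x|PP. norm (r i x - r j x)) < e" if "e > 0" for e
    using cau[OF that] unfolding dd_def by simp
  obtain s where s: "strict_mono s" and aec: "AE z in PP. Cauchy (\<lambda>i. r (s i) z)"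
    using cauchy_L1_AE_cauchy_subseq[of PP r, OF ri cau'] by blast
  define \<rho> where "\<rho> z = max 0 (lim (\<lambda>i. r (s i) z))" for z
  have \<rho>m[measurable]: "\<rho> \<in> borel_measurable PP" unfolding \<rho>_def by measurable
  have \<rho>n: "\<forall>z. 0 \<le> \<rho> z" by (simp add: \<rho>_def)
  have conv: "AE z in PP. (\<lambda>i. r (s i) z) \<longlonglongrightarrow> \<rho> z"
    using aec
  proof eventually_elim
    case (elim z)
    then have l: "(\<lambda>i. r (s i) z) \<longlonglongrightarrow> lim (\<lambda>i. r (s i) z)"
      by (simp add: Cauchy_convergent_iff convergent_LIMSEQ_iff)
    then have "lim (\<lambda>i. r (s i) z) \<ge> 0" by (intro LIMSEQ_le_const[OF l]) (auto intro: rn)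
    then show ?case using l by (simp add: \<rho>_def)
  qed
  have sle: "i \<le> s i" for i using s by (rule seq_suble)
  have ddb: "integrable PP (\<lambda>z. \<bar>r n z - \<rho> z\<bar>) \<and> dd (r n) \<rho> \<le> e"
    if e: "e > 0" and N: "\<forall>i\<ge>N. \<forall>j\<ge>N. dd (r i) (r j) < e" and n: "n \<ge> N" for e N n
  proof -
    have "integrable PP (\<lambda>z. \<bar>r n z - \<rho> z\<bar>) \<and> (\<integral>z. \<bar>r n z - \<rho> z\<bar> \<partial>PP) \<le> e"
    proof (rule fatou_real[where u="\<lambda>i z. \<bar>r n z - r (s i) z\<bar>"])
      show "(\<lambda>i z. \<bar>r n z - r (s i) z\<bar>) i \<in> borel_measurable PP" for i by measurable
      show "integrable PP ((\<lambda>i z. \<bar>r n z - r (s i) z\<bar>) i)" for i using ri by simp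
      show "0 \<le> (\<lambda>i z. \<bar>r n z - r (s i) z\<bar>) i z" for i z by simp
      show "(\<lambda>z. \<bar>r n z - \<rho> z\<bar>) \<in> borel_measurable PP" by measurable
      show "AE z in PP. (\<lambda>i. (\<lambda>i z. \<bar>r n z - r (s i) z\<bar>) i z) \<longlonglongrightarrow> \<bar>r n z - \<rho> z\<bar>"
        using conv by eventually_elim (auto intro!: tendsto_intros)
      show "eventually (\<lambda>i. (\<integral>z. (\<lambda>i z. \<bar>r n z - r (s i) z\<bar>) i z \<partial>PP) \<le> e) sequentially"
        unfolding eventually_sequentially
      proof (intro exI allI impI)
        fix i assume "i \<ge> N"
        then have "s i \<ge> N" using sle[of i] by simp
        then have "dd (r n) (r (s i)) < e" using N n by blast
        then show "(\<integral>z. (\<lambda>i z. \<bar>r n z - r (s i) z\<bar>) i z \<partial>PP) \<le> e" unfolding dd_def by simp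
      qed
    qed
    then show ?thesis unfolding dd_def by simp
  qed
  obtain N1 where N1: "\<forall>i\<ge>N1. \<forall>j\<ge>N1. dd (r i) (r j) < 1" using cau[of 1] by auto
  have "integrable PP (\<lambda>z. \<bar>r N1 z - \<rho> z\<bar>)" using ddb[OF _ N1] by simp
  then have i1: "integrable PP (\<lambda>z. r N1 z - \<rho> z)" by (subst integrable_abs_iff[symmetric]) auto
  have "integrable PP (\<lambda>z. r N1 z - (r N1 z - \<rho> z))" by (rule Bochner_Integration.integrable_diff[OF ri[of N1] i1])
  then have \<rho>i: "integrable PP \<rho>" by simp
  have ddlim: "(\<lambda>n. dd (r n) \<rho>) \<longlonglongrightarrow> 0"
  proof (rule LIMSEQ_I)
    fix e :: real assume e: "e > 0"
    obtain N where N: "\<forall>i\<ge>N. \<forall>j\<ge>N. dd (r i) (r j) < e/2" using cau[of "e/2"] e by auto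
    have "\<forall>n\<ge>N. norm (dd (r n) \<rho> - 0) < e"
    proof (intro allI impI)
      fix n assume "n \<ge> N"
      then have "dd (r n) \<rho> \<le> e/2" using ddb[OF _ N] e by simp
      then show "norm (dd (r n) \<rho> - 0) < e" using dd_nonneg[of "r n" \<rho>] e by simp
    qed
    then show "\<exists>N. \<forall>n\<ge>N. norm (dd (r n) \<rho> - 0) < e" by blast
  qed
  have indb: "\<bar>(\<integral>z. r n z * indicator S z \<partial>PP) - (\<integral>z. \<rho> z * indicator S z \<partial>PP)\<bar> \<le> dd (r n) \<rho>"
    if "S \<in> sets PP" for n S
    using int_diff_bound[OF ri \<rho>i, of "indicator S" 1 n] that by simp
  have \<rho>g: "margs \<rho>" unfolding margs_def
  proof (intro conjI ballI)
    fix A :: "'a set" assume A: "A \<in> sets borel"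
    have S: "A \<times> UNIV \<in> sets PP" using A UNIV_borel by (intro times_in_PP)
    have "measure Mm A - (\<integral>z. \<rho> z * indicator (A \<times> UNIV) z \<partial>PP) = 0"
    proof (rule abs_le_lim0[OF _ ddlim])
      fix n show "\<bar>measure Mm A - (\<integral>z. \<rho> z * indicator (A \<times> UNIV) z \<partial>PP)\<bar> \<le> dd (r n) \<rho>"
        using indb[OF S, of n] rg[of n] A unfolding margs_def by simp
    qed
    then show "(\<integral>z. \<rho> z * indicator (A \<times> UNIV) z \<partial>PP) = measure Mm A" by simp
  next
    fix A :: "'a set" assume A: "A \<in> sets borel"
    have S: "UNIV \<times> A \<in> sets PP" using A UNIV_borel by (intro times_in_PP)
    have "measure Mp A - (\<integral>z. \<rho> z * indicator (UNIV \<times> A) z \<partial>PP) = 0"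
    proof (rule abs_le_lim0[OF _ ddlim])
      fix n show "\<bar>measure Mp A - (\<integral>z. \<rho> z * indicator (UNIV \<times> A) z \<partial>PP)\<bar> \<le> dd (r n) \<rho>"
        using indb[OF S, of n] rg[of n] A unfolding margs_def by simp
    qed
    then show "(\<integral>z. \<rho> z * indicator (UNIV \<times> A) z \<partial>PP) = measure Mp A" by simp
  qed
  have entb: "integrable PP (\<lambda>z. \<rho> z * ln (\<rho> z) + 1) \<and> (\<integral>z. \<rho> z * ln (\<rho> z) + 1 \<partial>PP) \<le> Lm + 1 + \<delta>"
    if d: "\<delta> > 0" for \<delta>
  proof (rule fatou_real[where u="\<lambda>i z. r (s i) z * ln (r (s i) z) + 1"])
    show "(\<lambda>i z. r (s i) z * ln (r (s i) z) + 1) i \<in> borel_measurable PP" for i by measurable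
    show "integrable PP ((\<lambda>i z. r (s i) z * ln (r (s i) z) + 1) i)" for i using rl by simp
    show "0 \<le> (\<lambda>i z. r (s i) z * ln (r (s i) z) + 1) i z" for i z
      using xlnx_ge[of "r (s i) z"] rn[of "s i" z] by simp
    show "(\<lambda>z. \<rho> z * ln (\<rho> z) + 1) \<in> borel_measurable PP" by measurable
    show "AE z in PP. (\<lambda>i. (\<lambda>i z. r (s i) z * ln (r (s i) z) + 1) i z) \<longlonglongrightarrow> \<rho> z * ln (\<rho> z) + 1"
      using conv by eventually_elim (auto intro!: tendsto_intros xlnx_tendsto rn)
    have "(L \<circ> s) \<longlonglongrightarrow> Lm" using Lc s by (rule LIMSEQ_subseq_LIMSEQ)
    then have "eventually (\<lambda>i. L (s i) < Lm + \<delta>) sequentially"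
      using d by (intro order_tendstoD(2)) (auto simp: comp_def)
    then show "eventually (\<lambda>i. (\<integral>z. (\<lambda>i z. r (s i) z * ln (r (s i) z) + 1) i z \<partial>PP) \<le> Lm + 1 + \<delta>) sequentially"
    proof (rule eventually_mono)
      fix i assume "L (s i) < Lm + \<delta>"
      then have "H (r (s i)) \<le> Lm + \<delta>" using Hb[of "s i"] by simp
      then show "(\<integral>z. (\<lambda>i z. r (s i) z * ln (r (s i) z) + 1) i z \<partial>PP) \<le> Lm + 1 + \<delta>"
        using rl[of "s i"] unfolding H_def by simp
    qed
  qed
  have "integrable PP (\<lambda>z. \<rho> z * ln (\<rho> z) + 1)" using entb[of 1] by simp
  then have "integrable PP (\<lambda>z. (\<rho> z * ln (\<rho> z) + 1) - 1)"
    by (intro Bochner_Integration.integrable_diff) auto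
  then have \<rho>l: "integrable PP (\<lambda>z. \<rho> z * ln (\<rho> z))" by simp
  have "H \<rho> \<le> Lm"
  proof (rule field_le_epsilon)
    fix \<delta> :: real assume "\<delta> > 0"
    then have "(\<integral>z. \<rho> z * ln (\<rho> z) + 1 \<partial>PP) \<le> Lm + 1 + \<delta>" using entb by blast
    then show "H \<rho> \<le> Lm + \<delta>" using \<rho>l unfolding H_def by (simp add: P.prob_space)
  qed
  then show ?thesis using \<rho>m \<rho>n \<rho>i \<rho>g \<rho>l ddlim unfolding adm_def by blast
qed

end



lemma avg_le: fixes a b m p q :: real shows "a < m + p \<Longrightarrow> b < m + q \<Longrightarrow> (a+b)/2 - m \<le> (p+q)/2"
  by (simp add: field_simps)

context ot begin

definition FF :: "real \<Rightarrow> ('a \<times> 'a \<Rightarrow> real) \<Rightarrow> real" where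
  "FF e \<rho> = Cst \<rho> + e * H \<rho>"

lemma adm_one: "adm (\<lambda>_. 1)"
proof -
  have m1: "(\<integral>z. 1 * indicator (A \<times> UNIV) z \<partial>PP) = measure Mm A" if A: "A \<in> sets borel" for A
  proof -
    have "(\<integral>z. 1 * indicator (A \<times> UNIV) z \<partial>PP) = measure PP (A \<times> UNIV)"
      using times_in_PP[OF A UNIV_borel] by simp
    also have "\<dots> = measure Mm A"
    proof -
      have "emeasure PP (A \<times> UNIV) = emeasure Mm A * emeasure Mp UNIV"
        using A UNIV_borel by (intro M2.emeasure_pair_measure_Times) (auto simp: Mm_sets Mp_sets)
      also have "emeasure Mp UNIV = 1" using M2.emeasure_space_1 by simp
      finally show ?thesis by (simp add: measure_def)
    qed
    finally show ?thesis .
  qed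
  have m2: "(\<integral>z. 1 * indicator (UNIV \<times> A) z \<partial>PP) = measure Mp A" if A: "A \<in> sets borel" for A
  proof -
    have "(\<integral>z. 1 * indicator (UNIV \<times> A) z \<partial>PP) = measure PP (UNIV \<times> A)"
      using times_in_PP[OF UNIV_borel A] by simp
    also have "\<dots> = measure Mp A"
    proof -
      have "emeasure PP (UNIV \<times> A) = emeasure Mm UNIV * emeasure Mp A"
        using A UNIV_borel by (intro M2.emeasure_pair_measure_Times) (auto simp: Mm_sets Mp_sets)
      also have "emeasure Mm UNIV = 1" using M1.emeasure_space_1 by simp
      finally show ?thesis by (simp add: measure_def)
    qed
    finally show ?thesis .
  qed
  show ?thesis unfolding adm_def margs_def using m1 m2 by simp
qed

lemma H_one: "H (\<lambda>_. 1) = 0" unfolding H_def by simp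

lemma FF_lower: "adm \<rho> \<Longrightarrow> e \<ge> 0 \<Longrightarrow> FF e \<rho> \<ge> - Bc"
  using Cst_bound[of \<rho>] H_nonneg[of \<rho>] unfolding FF_def by (smt (verit) mult_nonneg_nonneg)

lemma mid_ineq:
  assumes "adm \<rho>" "adm \<sigma>" "e \<ge> 0"
  shows "FF e (mid \<rho> \<sigma>) \<le> (FF e \<rho> + FF e \<sigma>)/2 - e * (dd \<rho> \<sigma>)^2/8"
proof -
  have "e * H (mid \<rho> \<sigma>) \<le> e * ((H \<rho> + H \<sigma>)/2 - (dd \<rho> \<sigma>)^2/8)"
    using H_mid[OF assms(1,2)] assms(3) by (rule mult_left_mono)
  moreover have "e * ((H \<rho> + H \<sigma>)/2 - (dd \<rho> \<sigma>)^2/8) = e * H \<rho>/2 + e * H \<sigma>/2 - e * (dd \<rho> \<sigma>)^2/8"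
    by (simp add: algebra_simps add_divide_distrib diff_divide_distrib)
  ultimately show ?thesis unfolding FF_def Cst_mid[OF assms(1,2)] add_divide_distrib by linarith
qed

lemma dd_zero_eq:
  assumes "adm \<rho>" "adm \<sigma>" "dd \<rho> \<sigma> = 0"
  shows "dens \<rho> = dens \<sigma>"
proof -
  have i: "integrable PP (\<lambda>z. \<bar>\<rho> z - \<sigma> z\<bar>)" using assms unfolding adm_def by simp
  have "AE z in PP. \<bar>\<rho> z - \<sigma> z\<bar> = 0"
    using integral_nonneg_eq_0_iff_AE[OF i] assms(3) unfolding dd_def by simp
  then have "AE z in PP. ennreal (\<rho> z) = ennreal (\<sigma> z)" by eventually_elim simp
  then show ?thesis unfolding dens_def using assms unfolding adm_def
    by (intro density_cong) auto
qed

lemma exists_min: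
  assumes e: "e > 0"
  shows "\<exists>\<rho>. adm \<rho> \<and> (\<forall>\<sigma>. adm \<sigma> \<longrightarrow> FF e \<rho> \<le> FF e \<sigma>)"
proof -
  define S where "S = FF e ` {\<rho>. adm \<rho>}"
  define m where "m = Inf S"
  have ne: "S \<noteq> {}" unfolding S_def using adm_one by auto
  have bb: "bdd_below S" unfolding S_def using FF_lower e by (intro bdd_belowI[of _ "-Bc"]) auto
  have mle: "m \<le> FF e \<sigma>" if "adm \<sigma>" for \<sigma>
    unfolding m_def using bb that by (intro cInf_lower) (auto simp: S_def)
  have "\<exists>\<rho>. adm \<rho> \<and> FF e \<rho> < m + 1/(Suc n)" for n
  proof -
    have "Inf S < m + 1/(Suc n)" unfolding m_def by simp
    then obtain x where "x \<in> S" "x < m + 1/(Suc n)" using cInf_less_iff[OF ne bb] by blast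
    then show ?thesis unfolding S_def by auto
  qed
  then obtain r where r: "\<And>n. adm (r n)" "\<And>n. FF e (r n) < m + 1/(Suc n)" by metis
  have ddsq: "e * (dd (r i) (r j))^2 \<le> 8 * ((1/(Suc i) + 1/(Suc j))/2)" for i j
  proof -
    have "m \<le> FF e (mid (r i) (r j))" using mle adm_mid r(1) by blast
    also have "\<dots> \<le> (FF e (r i) + FF e (r j))/2 - e * (dd (r i) (r j))^2/8"
      using mid_ineq[OF r(1) r(1)] e by simp
    finally have "e * (dd (r i) (r j))^2/8 \<le> (FF e (r i) + FF e (r j))/2 - m" by linarith
    also have "\<dots> \<le> (1/(Suc i) + 1/(Suc j))/2" using avg_le[OF r(2)[of i] r(2)[of j]] .
    finally show "e * (dd (r i) (r j))^2 \<le> 8 * ((1/(Suc i) + 1/(Suc j))/2)" by simp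
  qed
  have cau: "\<exists>N. \<forall>i\<ge>N. \<forall>j\<ge>N. dd (r i) (r j) < d" if d: "d > 0" for d
  proof -
    obtain N :: nat where N: "N > 8/(e*d^2)" using reals_Archimedean2 by blast
    have "\<forall>i\<ge>N. \<forall>j\<ge>N. dd (r i) (r j) < d"
    proof (intro allI impI)
      fix i j assume ij: "i \<ge> N" "j \<ge> N"
      have pos: "8/(e*d^2) > 0" using e d by simp
      have "1/real (Suc i) \<le> 1/real (Suc N)" using ij by (simp add: frac_le)
      moreover have "1/real (Suc j) \<le> 1/real (Suc N)" using ij by (simp add: frac_le)
      ultimately have "(1/(Suc i) + 1/(Suc j))/2 \<le> 1/real (Suc N)" by simp
      also have "\<dots> < 1/(8/(e*d^2))" using N pos by (intro divide_strict_left_mono) auto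
      also have "\<dots> = e*d^2/8" by simp
      finally have "(1/(Suc i) + 1/(Suc j))/2 < e*d^2/8" .
      then have "8 * ((1/(Suc i) + 1/(Suc j))/2) < e * d^2" by simp
      then have "e * (dd (r i) (r j))^2 < e * d^2" using ddsq[of i j] by linarith
      then have "(dd (r i) (r j))^2 < d^2" using e by simp
      then show "dd (r i) (r j) < d" using d dd_nonneg[of "r i" "r j"] by (simp add: power_less_imp_less_base)
    qed
    then show ?thesis by blast
  qed
  have Ccau: "Cauchy (\<lambda>n. Cst (r n))"
  proof (rule metric_CauchyI)
    fix d :: real assume d: "d > 0"
    obtain N where N: "\<forall>i\<ge>N. \<forall>j\<ge>N. dd (r i) (r j) < d/Bc" using cau[of "d/Bc"] d Bc(1) by auto
    have "\<forall>i\<ge>N. \<forall>j\<ge>N. dist (Cst (r i)) (Cst (r j)) < d"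
    proof (intro allI impI)
      fix i j assume "i \<ge> N" "j \<ge> N"
      then have "dd (r i) (r j) < d/Bc" using N by blast
      then have "Bc * dd (r i) (r j) < d" using Bc(1) by (simp add: field_simps)
      then show "dist (Cst (r i)) (Cst (r j)) < d" using Cst_diff[OF r(1) r(1), of i j]
        by (simp add: dist_real_def)
    qed
    then show "\<exists>N. \<forall>m\<ge>N. \<forall>n\<ge>N. dist (Cst (r m)) (Cst (r n)) < d" by blast
  qed
  then obtain C0 where C0: "(\<lambda>n. Cst (r n)) \<longlonglongrightarrow> C0" using Cauchy_convergent_iff convergent_def by blast
  have Hb: "H (r n) \<le> (m + 1/(Suc n) - Cst (r n))/e" for n
  proof -
    have "e * H (r n) < m + 1/(Suc n) - Cst (r n)" using r(2)[of n] unfolding FF_def by linarith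
    then show ?thesis by (subst pos_le_divide_eq[OF e]) (simp add: mult.commute)
  qed
  have Lc: "(\<lambda>n. (m + 1/(Suc n) - Cst (r n))/e) \<longlonglongrightarrow> (m + 0 - C0)/e"
  proof -
    have "(\<lambda>n. 1/real (Suc n)) \<longlonglongrightarrow> 0" using LIMSEQ_inverse_real_of_nat by (simp add: inverse_eq_divide)
    then show ?thesis by (intro tendsto_intros C0) (use e in auto)
  qed
  obtain \<rho> where \<rho>: "adm \<rho>" "(\<lambda>n. dd (r n) \<rho>) \<longlonglongrightarrow> 0" "H \<rho> \<le> (m + 0 - C0)/e"
    using adm_limit[OF r(1) cau Hb Lc] by blast
  have "(\<lambda>n. Cst (r n)) \<longlonglongrightarrow> Cst \<rho>"
  proof -
    have "(\<lambda>n. Cst (r n) - Cst \<rho>) \<longlonglongrightarrow> 0"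
    proof (rule Lim_null_comparison)
      show "eventually (\<lambda>n. norm (Cst (r n) - Cst \<rho>) \<le> Bc * dd (r n) \<rho>) sequentially"
        using Cst_diff[OF r(1) \<rho>(1)] by simp
      show "(\<lambda>n. Bc * dd (r n) \<rho>) \<longlonglongrightarrow> 0" using tendsto_mult_right_zero[OF \<rho>(2)] by simp
    qed
    then show ?thesis by (simp add: LIM_zero_iff)
  qed
  then have "C0 = Cst \<rho>" using C0 LIMSEQ_unique by blast
  then have "FF e \<rho> \<le> m" using \<rho>(3) e unfolding FF_def by (simp add: field_simps)
  then show ?thesis using \<rho>(1) mle by force
qed

end



context ot begin

definition rho :: "real \<Rightarrow> 'a \<times> 'a \<Rightarrow> real" where
  "rho e = (SOME \<rho>. adm \<rho> \<and> (\<forall>\<sigma>. adm \<sigma> \<longrightarrow> FF e \<rho> \<le> FF e \<sigma>))"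

lemma rho_both: "e > 0 \<Longrightarrow> adm (rho e) \<and> (\<forall>\<sigma>. adm \<sigma> \<longrightarrow> FF e (rho e) \<le> FF e \<sigma>)"
  unfolding rho_def by (rule someI_ex[OF exists_min])

lemma rho_adm: "e > 0 \<Longrightarrow> adm (rho e)" using rho_both by blast
lemma rho_min: "e > 0 \<Longrightarrow> adm \<sigma> \<Longrightarrow> FF e (rho e) \<le> FF e \<sigma>" using rho_both by blast

definition g where "g e = H (rho e)"
definition cs where "cs e = Cst (rho e)"

lemma ent_obj_dens: "adm \<rho> \<Longrightarrow> ent_obj Mm Mp c e (dens \<rho>) = ereal (FF e \<rho>)"
  unfolding ent_obj_def FF_def by (simp add: cost_dens rel_ent_dens)

lemma ent_obj_ge:
  assumes e: "e > 0" and gm: "\<gamma> \<in> couplings Mm Mp"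
  shows "ereal (FF e (rho e)) \<le> ent_obj Mm Mp c e \<gamma>"
proof (cases "rel_ent \<gamma> PP = \<infinity>")
  case True
  then show ?thesis unfolding ent_obj_def using e by simp
next
  case False
  then obtain \<sigma> where \<sigma>: "adm \<sigma>" "\<gamma> = dens \<sigma>" using finite_ent_dens[OF gm] by blast
  then show ?thesis using ent_obj_dens[OF \<sigma>(1)] rho_min[OF e \<sigma>(1)] by simp
qed

lemma INF_pos: assumes e: "e > 0"
  shows "(INF \<gamma>\<in>couplings Mm Mp. ent_obj Mm Mp c e \<gamma>) = ereal (FF e (rho e))"
proof (rule INF_eqI)
  show "\<And>i. i \<in> couplings Mm Mp \<Longrightarrow> ereal (FF e (rho e)) \<le> ent_obj Mm Mp c e i"
    using ent_obj_ge[OF e] by blast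
  fix y assume "\<And>i. i \<in> couplings Mm Mp \<Longrightarrow> y \<le> ent_obj Mm Mp c e i"
  then have "y \<le> ent_obj Mm Mp c e (dens (rho e))" using adm_coupling[OF rho_adm[OF e]] by blast
  then show "y \<le> ereal (FF e (rho e))" using ent_obj_dens[OF rho_adm[OF e]] by simp
qed

lemma ot_val_pos: "e > 0 \<Longrightarrow> ot_val Mm Mp c e = FF e (rho e)"
  unfolding ot_val_def by (simp add: INF_pos)

lemma v_eq: "e > 0 \<Longrightarrow> ot_val Mm Mp c e = cs e + e * g e"
  by (simp add: ot_val_pos FF_def cs_def g_def)

lemma ent_plan_eq:
  assumes e: "e > 0"
  shows "ent_plan Mm Mp c e = dens (rho e)"
  unfolding ent_plan_def
proof (rule the_equality)
  show "dens (rho e) \<in> couplings Mm Mp \<and>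
    ent_obj Mm Mp c e (dens (rho e)) = (INF \<gamma>'\<in>couplings Mm Mp. ent_obj Mm Mp c e \<gamma>')"
    using adm_coupling[OF rho_adm[OF e]] ent_obj_dens[OF rho_adm[OF e]] INF_pos[OF e] by simp
  fix \<gamma> assume a: "\<gamma> \<in> couplings Mm Mp \<and> ent_obj Mm Mp c e \<gamma> = (INF \<gamma>'\<in>couplings Mm Mp. ent_obj Mm Mp c e \<gamma>')"
  then have eq: "ent_obj Mm Mp c e \<gamma> = ereal (FF e (rho e))" using INF_pos[OF e] by simp
  have "rel_ent \<gamma> PP \<noteq> \<infinity>"
  proof
    assume "rel_ent \<gamma> PP = \<infinity>"
    then have "ent_obj Mm Mp c e \<gamma> = \<infinity>" unfolding ent_obj_def using e by simp
    then show False using eq by simp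
  qed
  then obtain \<sigma> where \<sigma>: "adm \<sigma>" "\<gamma> = dens \<sigma>" using finite_ent_dens a by blast
  have Fs: "FF e \<sigma> = FF e (rho e)" using eq ent_obj_dens[OF \<sigma>(1)] \<sigma>(2) by simp
  have "FF e (rho e) \<le> FF e (mid (rho e) \<sigma>)" using rho_min[OF e adm_mid[OF rho_adm[OF e] \<sigma>(1)]] .
  also have "\<dots> \<le> (FF e (rho e) + FF e \<sigma>)/2 - e * (dd (rho e) \<sigma>)^2/8"
    using mid_ineq[OF rho_adm[OF e] \<sigma>(1)] e by simp
  finally have "e * (dd (rho e) \<sigma>)^2 \<le> 0" using Fs by simp
  then have "(dd (rho e) \<sigma>)^2 \<le> 0" using e by (simp add: mult_le_0_iff)
  then have "dd (rho e) \<sigma> = 0" by simp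
  then show "\<gamma> = dens (rho e)" using dd_zero_eq[OF rho_adm[OF e] \<sigma>(1)] \<sigma>(2) by simp
qed

lemma rel_ent_plan: "e > 0 \<Longrightarrow> rel_ent (ent_plan Mm Mp c e) PP = ereal (g e)"
  by (simp add: ent_plan_eq rel_ent_dens rho_adm g_def)

lemma g_nonneg: "e > 0 \<Longrightarrow> g e \<ge> 0" unfolding g_def using H_nonneg rho_adm by blast

lemma super: "e > 0 \<Longrightarrow> x > 0 \<Longrightarrow> cs x + x * g x \<le> cs e + x * g e"
  using rho_min[of x "rho e"] rho_adm[of e] unfolding FF_def cs_def g_def by simp

lemma g_mono: assumes "0 < x" "x \<le> e" shows "g e \<le> g x"
proof -
  have e: "e > 0" using assms by simp
  have a: "cs x + x * g x \<le> cs e + x * g e" using super[OF e assms(1)] .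
  have b: "cs e + e * g e \<le> cs x + e * g x" using super[OF assms(1) e] .
  have "(e - x) * (g e - g x) \<le> 0" using a b by (simp add: algebra_simps)
  show ?thesis
  proof (cases "x = e")
    case True then show ?thesis by simp
  next
    case False
    then have "e - x > 0" using assms by simp
    then show ?thesis using \<open>(e - x) * (g e - g x) \<le> 0\<close> by (simp add: mult_le_0_iff)
  qed
qed

lemma quot_bounds:
  assumes e: "e > 0" and x: "x > 0"
  shows "(x - e) * g x \<le> ot_val Mm Mp c x - ot_val Mm Mp c e"
    and "ot_val Mm Mp c x - ot_val Mm Mp c e \<le> (x - e) * g e"
proof -
  have a: "cs x + x * g x \<le> cs e + x * g e" using super[OF e x] .
  have b: "cs e + e * g e \<le> cs x + e * g x" using super[OF x e] .
  show "(x - e) * g x \<le> ot_val Mm Mp c x - ot_val Mm Mp c e"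
    using b by (simp add: v_eq e x algebra_simps)
  show "ot_val Mm Mp c x - ot_val Mm Mp c e \<le> (x - e) * g e"
    using a by (simp add: v_eq e x algebra_simps)
qed

lemma g_cont:
  assumes e: "e > 0"
  shows "(g \<longlongrightarrow> g e) (at e)"
proof -
  define M where "M = g (e/2)"
  have gM: "g x \<le> M" if "x \<ge> e/2" for x unfolding M_def using g_mono[of "e/2" x] that e by simp
  have M0: "M \<ge> 0" unfolding M_def using g_nonneg e by simp
  define b where "b x = (2/e) * (2*(\<bar>x - e\<bar> * M) + Bc * sqrt (8*M*\<bar>x - e\<bar>/e))" for x
  have bl: "(b \<longlongrightarrow> 0) (at e)"
  proof -
    have "(b \<longlongrightarrow> b e) (at e)" unfolding b_def using e by (intro tendsto_intros) auto
    then show ?thesis by (simp add: b_def)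
  qed
  have "e/2 < e" using e by simp
  then have ev: "eventually (\<lambda>x. x > e/2) (at e)"
    by (rule order_tendstoD(1)[OF tendsto_ident_at])
  have "((\<lambda>x. g x - g e) \<longlongrightarrow> 0) (at e)"
  proof (rule Lim_null_comparison[OF _ bl])
    show "eventually (\<lambda>x. norm (g x - g e) \<le> b x) (at e)"
      using ev
    proof (rule eventually_mono)
      fix x assume x2: "x > e/2"
      then have x: "x > 0" using e by simp
      have gx: "0 \<le> g x" "g x \<le> M" using g_nonneg[OF x] gM[of x] x2 by auto
      have ge: "0 \<le> g e" "g e \<le> M" using g_nonneg[OF e] gM[of e] e by auto
      have q1: "(x - e) * g x \<le> ot_val Mm Mp c x - ot_val Mm Mp c e" by (rule quot_bounds(1)[OF e x])
      have q2: "ot_val Mm Mp c x - ot_val Mm Mp c e \<le> (x - e) * g e" by (rule quot_bounds(2)[OF e x])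
      have absb: "\<bar>(x - e) * y\<bar> \<le> \<bar>x - e\<bar> * M" if "0 \<le> y" "y \<le> M" for y
        using that by (simp add: abs_mult mult_left_mono)
      have vd: "\<bar>ot_val Mm Mp c x - ot_val Mm Mp c e\<bar> \<le> \<bar>x - e\<bar> * M"
        using q1 q2 absb[OF gx] absb[OF ge] by (simp add: abs_le_iff)
      have ad: "adm (rho e)" "adm (rho x)" using rho_adm e x by auto
      have "FF e (rho e) \<le> FF e (mid (rho e) (rho x))" using rho_min[OF e adm_mid[OF ad]] .
      also have "\<dots> \<le> (FF e (rho e) + FF e (rho x))/2 - e * (dd (rho e) (rho x))^2/8"
        using mid_ineq[OF ad] e by simp
      finally have "e * (dd (rho e) (rho x))^2/8 \<le> (FF e (rho x) - FF e (rho e))/2" by argo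
      moreover have "FF e (rho x) = ot_val Mm Mp c x + (e - x) * g x"
        using v_eq[OF x] unfolding FF_def cs_def g_def by (simp add: algebra_simps)
      moreover have "FF e (rho e) = ot_val Mm Mp c e" using ot_val_pos[OF e] by simp
      moreover have "\<bar>(e - x) * g x\<bar> \<le> \<bar>x - e\<bar> * M" using absb[OF gx] by (simp add: abs_mult abs_minus_commute)
      ultimately have "e * (dd (rho e) (rho x))^2/8 \<le> \<bar>x - e\<bar> * M" using vd by (simp add: abs_le_iff)
      then have ddsq: "(dd (rho e) (rho x))^2 \<le> 8*M*\<bar>x - e\<bar>/e" using e by (simp add: field_simps)
      have ddb: "dd (rho e) (rho x) \<le> sqrt (8*M*\<bar>x - e\<bar>/e)"
        using real_le_rsqrt[OF ddsq] .
      have csd: "\<bar>cs x - cs e\<bar> \<le> Bc * sqrt (8*M*\<bar>x - e\<bar>/e)"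
      proof -
        have "\<bar>cs x - cs e\<bar> \<le> Bc * dd (rho e) (rho x)"
          using Cst_diff[OF ad] unfolding cs_def by (simp add: abs_minus_commute)
        also have "\<dots> \<le> Bc * sqrt (8*M*\<bar>x - e\<bar>/e)" using ddb Bc(1) by simp
        finally show ?thesis .
      qed
      have key: "x * (g x - g e) = (ot_val Mm Mp c x - ot_val Mm Mp c e) - (cs x - cs e) - (x - e) * g e"
        using v_eq[OF x] v_eq[OF e] by (simp add: algebra_simps)
      have "\<bar>x * (g x - g e)\<bar> \<le> 2*(\<bar>x - e\<bar> * M) + Bc * sqrt (8*M*\<bar>x - e\<bar>/e)"
        unfolding key using vd csd absb[OF ge] by (simp add: abs_le_iff)
      then have "x * \<bar>g x - g e\<bar> \<le> 2*(\<bar>x - e\<bar> * M) + Bc * sqrt (8*M*\<bar>x - e\<bar>/e)"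
        using x by (simp add: abs_mult)
      moreover have "e/2 * \<bar>g x - g e\<bar> \<le> x * \<bar>g x - g e\<bar>" using x2 by (intro mult_right_mono) auto
      ultimately have "e/2 * \<bar>g x - g e\<bar> \<le> 2*(\<bar>x - e\<bar> * M) + Bc * sqrt (8*M*\<bar>x - e\<bar>/e)" by linarith
      then show "norm (g x - g e) \<le> b x" unfolding b_def using e by (simp add: field_simps)
    qed
  qed
  then show ?thesis by (simp add: LIM_zero_iff)
qed

lemma deriv_pos:
  assumes e: "e > 0"
  shows "(ot_val Mm Mp c has_real_derivative g e) (at e)"
proof -
  have ev: "eventually (\<lambda>x. x > 0) (at e)"
    using e by (rule order_tendstoD(1)[OF tendsto_ident_at])
  have ne: "eventually (\<lambda>y. y \<noteq> e) (at e)" by (simp add: eventually_at_filter)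
  have "((\<lambda>y. (ot_val Mm Mp c y - ot_val Mm Mp c e) / (y - e) - g e) \<longlongrightarrow> 0) (at e)"
  proof (rule Lim_null_comparison)
    have gl: "((\<lambda>x. g x - g e) \<longlongrightarrow> 0) (at e)" using g_cont[OF e] by (simp add: LIM_zero_iff)
    then show "((\<lambda>x. \<bar>g x - g e\<bar>) \<longlongrightarrow> 0) (at e)" using tendsto_rabs_zero by blast
    show "eventually (\<lambda>y. norm ((ot_val Mm Mp c y - ot_val Mm Mp c e) / (y - e) - g e) \<le> \<bar>g y - g e\<bar>) (at e)"
      using ev ne
    proof (eventually_elim)
      case (elim y)
      then have y: "y > 0" "y \<noteq> e" by auto
      have q1: "(y - e) * g y \<le> ot_val Mm Mp c y - ot_val Mm Mp c e" by (rule quot_bounds(1)[OF e y(1)])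
      have q2: "ot_val Mm Mp c y - ot_val Mm Mp c e \<le> (y - e) * g e" by (rule quot_bounds(2)[OF e y(1)])
      show ?case
      proof (cases "y > e")
        case True
        then have p: "y - e > 0" by simp
        have "g y \<le> (ot_val Mm Mp c y - ot_val Mm Mp c e) / (y - e)"
          using q1 p by (simp add: pos_le_divide_eq mult.commute)
        moreover have "(ot_val Mm Mp c y - ot_val Mm Mp c e) / (y - e) \<le> g e"
          using q2 p by (simp add: pos_divide_le_eq mult.commute)
        ultimately show ?thesis by (simp add: abs_le_iff)
      next
        case False
        then have p: "y - e < 0" using y by simp
        have "g y \<ge> (ot_val Mm Mp c y - ot_val Mm Mp c e) / (y - e)"
          using q1 p by (simp add: neg_divide_le_eq mult.commute)
        moreover have "(ot_val Mm Mp c y - ot_val Mm Mp c e) / (y - e) \<ge> g e"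
          using q2 p by (simp add: neg_le_divide_eq mult.commute)
        ultimately show ?thesis by (simp add: abs_le_iff)
      qed
    qed
  qed
  then have "((\<lambda>y. (ot_val Mm Mp c y - ot_val Mm Mp c e) / (y - e)) \<longlongrightarrow> g e) (at e)"
    by (simp add: LIM_zero_iff)
  then show ?thesis by (simp add: has_field_derivative_iff)
qed

lemma part1: "\<forall>e>0. \<exists>D. rel_ent (ent_plan Mm Mp c e) PP = ereal D \<and>
                   (ot_val Mm Mp c has_real_derivative D) (at e)"
  using rel_ent_plan deriv_pos by blast

end



lemma at_within_Ici0: "at (0::real) within {0..} = at_right 0"
  unfolding at_within_def by (rule arg_cong[where f="\<lambda>S. inf (nhds 0) (principal S)"]) auto

lemma ev_pos_right: "eventually (\<lambda>x::real. x > 0) (at_right 0)"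
  by (simp add: eventually_at_filter)

context ot begin

lemma dd_sym: "dd \<rho> \<sigma> = dd \<sigma> \<rho>" unfolding dd_def by (simp add: abs_minus_commute)

lemma dd_two:
  assumes x: "0 < x" and xe: "x \<le> e"
  shows "(dd (rho e) (rho x))^2 \<le> 4 * (g x - g e)"
proof -
  have e: "e > 0" using x xe by simp
  have ad: "adm (rho e)" "adm (rho x)" using rho_adm e x by auto
  have "FF e (rho e) \<le> FF e (mid (rho e) (rho x))" using rho_min[OF e adm_mid[OF ad]] .
  also have "\<dots> \<le> (FF e (rho e) + FF e (rho x))/2 - e * (dd (rho e) (rho x))^2/8"
    using mid_ineq[OF ad] e by simp
  finally have A: "e * (dd (rho e) (rho x))^2/8 \<le> (FF e (rho x) - FF e (rho e))/2" by argo
  have B: "cs x + x * g x \<le> cs e + x * g e" using super[OF e x] .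
  have gm: "g e \<le> g x" using g_mono[OF x xe] .
  have C: "x * (g x - g e) \<ge> 0" using gm x by simp
  have FFx: "FF e (rho x) = cs x + e * g x" unfolding FF_def cs_def g_def ..
  have FFe: "FF e (rho e) = cs e + e * g e" unfolding FF_def cs_def g_def ..
  have "e * (dd (rho e) (rho x))^2/8 \<le> (e * (g x - g e) - x * (g x - g e))/2"
    using A B unfolding FFx FFe by (simp add: algebra_simps)
  also have "\<dots> \<le> e * (g x - g e)/2" using C by simp
  finally have "e * (dd (rho e) (rho x))^2 \<le> e * (4 * (g x - g e))" by (simp add: field_simps)
  then show ?thesis using e by simp
qed

theorem part2:
  assumes hyp: "\<exists>\<gamma>0\<in>opt_plans Mm Mp c. rel_ent \<gamma>0 PP < \<infinity>"
  shows "\<exists>v' D. (INF \<gamma>\<in>opt_plans Mm Mp c. rel_ent \<gamma> PP) = ereal D \<and>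
            v' 0 = D \<and>
            (\<forall>\<epsilon>\<ge>0. (ot_val Mm Mp c has_real_derivative v' \<epsilon>) (at \<epsilon> within {0..})) \<and>
            continuous_on {0..} v' \<and>
            ((\<lambda>\<epsilon>. (ot_val Mm Mp c \<epsilon> - ot_val Mm Mp c 0 - \<epsilon> * D) / \<epsilon>) \<longlongrightarrow> 0) (at_right 0) \<and>
            (\<exists>!\<gamma>s. \<gamma>s \<in> opt_plans Mm Mp c \<and>
                    rel_ent \<gamma>s PP = (INF \<gamma>\<in>opt_plans Mm Mp c. rel_ent \<gamma> PP)) \<and>
            narrow_tendsto (ent_plan Mm Mp c)
              (THE \<gamma>s. \<gamma>s \<in> opt_plans Mm Mp c \<and>
                    rel_ent \<gamma>s PP = (INF \<gamma>\<in>opt_plans Mm Mp c. rel_ent \<gamma> PP))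
              (at_right 0)"
proof -
  obtain \<gamma>0 where g0: "\<gamma>0 \<in> opt_plans Mm Mp c" "rel_ent \<gamma>0 PP < \<infinity>" using hyp by blast
  have g0c: "\<gamma>0 \<in> couplings Mm Mp" and g0o: "\<And>\<gamma>. \<gamma> \<in> couplings Mm Mp \<Longrightarrow> ot_cost Mm Mp c \<gamma>0 \<le> ot_cost Mm Mp c \<gamma>"
    using g0(1) unfolding opt_plans_def by auto
  obtain \<sigma>0 where s0: "adm \<sigma>0" "\<gamma>0 = dens \<sigma>0" using finite_ent_dens[OF g0c] g0(2) by auto
  define c0 where "c0 = Cst \<sigma>0"
  have c0cost: "ot_cost Mm Mp c \<gamma>0 = c0" unfolding c0_def s0(2) by (rule cost_dens[OF s0(1)])
  have c0le: "c0 \<le> ot_cost Mm Mp c \<gamma>" if "\<gamma> \<in> couplings Mm Mp" for \<gamma> using g0o[OF that] c0cost by simp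
  have c0leC: "c0 \<le> Cst \<sigma>" if "adm \<sigma>" for \<sigma> using c0le[OF adm_coupling[OF that]] cost_dens[OF that] by simp
  have v0: "ot_val Mm Mp c 0 = c0"
  proof -
    have "(INF \<gamma>\<in>couplings Mm Mp. ent_obj Mm Mp c 0 \<gamma>) = ereal c0"
    proof (rule INF_eqI)
      fix \<gamma> assume "\<gamma> \<in> couplings Mm Mp"
      then show "ereal c0 \<le> ent_obj Mm Mp c 0 \<gamma>" using c0le unfolding ent_obj_def by (simp add: zero_ereal_def[symmetric])
    next
      fix y assume "\<And>\<gamma>. \<gamma> \<in> couplings Mm Mp \<Longrightarrow> y \<le> ent_obj Mm Mp c 0 \<gamma>"
      then have "y \<le> ent_obj Mm Mp c 0 \<gamma>0" using g0c by blast
      then show "y \<le> ereal c0" unfolding ent_obj_def using c0cost by (simp add: zero_ereal_def[symmetric])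
    qed
    then show ?thesis unfolding ot_val_def by simp
  qed
  have csge: "cs e \<ge> c0" if "e > 0" for e unfolding cs_def using c0leC rho_adm that by blast
  have gle: "g e \<le> H \<sigma>" if e: "e > 0" and s: "adm \<sigma>" "Cst \<sigma> = c0" for e \<sigma>
  proof -
    have "cs e + e * g e \<le> c0 + e * H \<sigma>" using rho_min[OF e s(1)] s(2) unfolding FF_def cs_def g_def by simp
    then have "e * g e \<le> e * H \<sigma>" using csge[OF e] by linarith
    then show ?thesis using e by simp
  qed
  define eps where "eps n = 1 / real (Suc n)" for n
  have eps_pos: "eps n > 0" for n unfolding eps_def by simp
  have eps_mono: "eps j \<le> eps i" if "i \<le> j" for i j unfolding eps_def using that by (simp add: frac_le)
  define G where "G n = g (eps n)" for n
  have Ginc: "incseq G" unfolding incseq_def G_def using g_mono eps_pos eps_mono by blast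
  have Gbd: "G n \<le> H \<sigma>0" for n unfolding G_def using gle[OF eps_pos s0(1)] c0_def by simp
  have bddG: "bdd_above (range G)" using Gbd by (intro bdd_aboveI) auto
  define Ls where "Ls = (SUP n. G n)"
  have GLs: "G \<longlonglongrightarrow> Ls" unfolding Ls_def using LIMSEQ_incseq_SUP[OF bddG Ginc] .
  have GleLs: "G n \<le> Ls" for n unfolding Ls_def using bddG by (intro cSUP_upper) auto
  have eps_small: "\<exists>n. eps n < e" if "e > 0" for e
  proof -
    obtain n :: nat where "1/e < n" using reals_Archimedean2 by blast
    then have "1/e < real (Suc n)" by simp
    then have "1/real (Suc n) < e" using that by (simp add: field_simps)
    then show ?thesis unfolding eps_def by blast
  qed
  have gLs: "g e \<le> Ls" if e: "e > 0" for e
  proof -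
    obtain n where "eps n < e" using eps_small[OF e] by blast
    then have "g e \<le> G n" unfolding G_def using g_mono eps_pos by (simp add: less_imp_le)
    then show ?thesis using GleLs[of n] by simp
  qed
  define r where "r n = rho (eps n)" for n
  have radm: "adm (r n)" for n unfolding r_def using rho_adm eps_pos by blast
  have cau: "\<exists>N. \<forall>i\<ge>N. \<forall>j\<ge>N. dd (r i) (r j) < d" if d: "d > 0" for d
  proof -
    have "d^2/4 > 0" using d by simp
    then have "eventually (\<lambda>n. Ls - d^2/4 < G n) sequentially"
      using order_tendstoD(1)[OF GLs, of "Ls - d^2/4"] by simp
    then obtain N where N: "\<And>n. n \<ge> N \<Longrightarrow> Ls - d^2/4 < G n" by (auto simp: eventually_sequentially)
    have key: "dd (r i) (r j) < d" if ij: "N \<le> i" "i \<le> j" for i j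
    proof -
      have "(dd (r i) (r j))^2 \<le> 4 * (G j - G i)" unfolding r_def G_def
        using dd_two[OF eps_pos eps_mono[OF ij(2)]] .
      also have "\<dots> \<le> 4 * (Ls - G N)"
      proof -
        have "G N \<le> G i" using Ginc ij(1) by (simp add: incseq_def)
        then show ?thesis using GleLs[of j] by simp
      qed
      also have "\<dots> < 4 * (d^2/4)" using N[of N] by simp
      finally have "(dd (r i) (r j))^2 < d^2" by simp
      then show ?thesis using d dd_nonneg[of "r i" "r j"] by (simp add: power_less_imp_less_base)
    qed
    have "\<forall>i\<ge>N. \<forall>j\<ge>N. dd (r i) (r j) < d"
    proof (intro allI impI)
      fix i j assume "i \<ge> N" "j \<ge> N"
      then show "dd (r i) (r j) < d"
        using key[of i j] key[of j i] dd_sym[of "r i" "r j"] by (cases "i \<le> j") auto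
    qed
    then show ?thesis by blast
  qed
  have Hr: "H (r n) \<le> Ls" for n using GleLs[of n] unfolding G_def r_def g_def .
  obtain \<rho>s where rs: "adm \<rho>s" "(\<lambda>n. dd (r n) \<rho>s) \<longlonglongrightarrow> 0" "H \<rho>s \<le> Ls"
    using adm_limit[OF radm cau Hr tendsto_const] by blast
  have Clim: "(\<lambda>n. Cst (r n)) \<longlonglongrightarrow> Cst \<rho>s"
  proof -
    have "(\<lambda>n. Cst (r n) - Cst \<rho>s) \<longlonglongrightarrow> 0"
    proof (rule Lim_null_comparison)
      show "eventually (\<lambda>n. norm (Cst (r n) - Cst \<rho>s) \<le> Bc * dd (r n) \<rho>s) sequentially"
        using Cst_diff[OF radm rs(1)] by simp
      show "(\<lambda>n. Bc * dd (r n) \<rho>s) \<longlonglongrightarrow> 0" using tendsto_mult_right_zero[OF rs(2)] by simp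
    qed
    then show ?thesis by (simp add: LIM_zero_iff)
  qed
  have Clim2: "(\<lambda>n. Cst (r n)) \<longlonglongrightarrow> c0"
  proof (rule tendsto_sandwich[where f="\<lambda>n. c0" and h="\<lambda>n. c0 + eps n * H \<sigma>0"])
    show "eventually (\<lambda>n. c0 \<le> Cst (r n)) sequentially" using csge eps_pos unfolding cs_def r_def by simp
    show "eventually (\<lambda>n. Cst (r n) \<le> c0 + eps n * H \<sigma>0) sequentially"
    proof (rule always_eventually, rule allI)
      fix n
      have "cs (eps n) + eps n * g (eps n) \<le> c0 + eps n * H \<sigma>0"
        using rho_min[OF eps_pos s0(1)] unfolding FF_def cs_def g_def c0_def by simp
      moreover have "eps n * g (eps n) \<ge> 0" using eps_pos[of n] g_nonneg[OF eps_pos[of n]] by simp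
      ultimately show "Cst (r n) \<le> c0 + eps n * H \<sigma>0" unfolding cs_def r_def by linarith
    qed
    show "(\<lambda>n. c0) \<longlonglongrightarrow> c0" by simp
    have "eps \<longlonglongrightarrow> 0" unfolding eps_def using LIMSEQ_inverse_real_of_nat by (simp add: inverse_eq_divide)
    then show "(\<lambda>n. c0 + eps n * H \<sigma>0) \<longlonglongrightarrow> c0" by (auto intro!: tendsto_eq_intros)
  qed
  have Cs: "Cst \<rho>s = c0" using LIMSEQ_unique[OF Clim Clim2] .
  have rs_opt: "dens \<rho>s \<in> opt_plans Mm Mp c"
    unfolding opt_plans_def using adm_coupling[OF rs(1)] cost_dens[OF rs(1)] Cs c0le by auto
  have opt_dens: "\<exists>\<sigma>. adm \<sigma> \<and> \<gamma> = dens \<sigma> \<and> Cst \<sigma> = c0"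
    if oh1: "\<gamma> \<in> opt_plans Mm Mp c" and oh2: "rel_ent \<gamma> PP \<noteq> \<infinity>" for \<gamma>
  proof -
    have gc: "\<gamma> \<in> couplings Mm Mp" and go: "ot_cost Mm Mp c \<gamma> \<le> ot_cost Mm Mp c \<gamma>0"
      using oh1 g0c unfolding opt_plans_def by auto
    obtain \<sigma> where s: "adm \<sigma>" "\<gamma> = dens \<sigma>" using finite_ent_dens[OF gc oh2] by blast
    have "Cst \<sigma> = c0" using go c0le[OF gc] cost_dens[OF s(1)] c0cost s(2) by simp
    then show ?thesis using s by blast
  qed
  have LsleH: "Ls \<le> H \<sigma>" if "adm \<sigma>" "Cst \<sigma> = c0" for \<sigma>
    unfolding Ls_def using gle[OF eps_pos that] by (intro cSUP_least) (auto simp: G_def)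
  define D where "D = H \<rho>s"
  have DLs: "D = Ls" using LsleH[OF rs(1) Cs] rs(3) unfolding D_def by simp
  have Dle: "ereal D \<le> rel_ent \<gamma> PP" if gin: "\<gamma> \<in> opt_plans Mm Mp c" for \<gamma>
  proof (cases "rel_ent \<gamma> PP = \<infinity>")
    case True then show ?thesis by simp
  next
    case False
    then obtain \<sigma> where s: "adm \<sigma>" "\<gamma> = dens \<sigma>" "Cst \<sigma> = c0" using opt_dens[OF gin] by blast
    then show ?thesis using LsleH[OF s(1) s(3)] DLs rel_ent_dens[OF s(1)] by simp
  qed
  have INFD: "(INF \<gamma>\<in>opt_plans Mm Mp c. rel_ent \<gamma> PP) = ereal D"
  proof (rule INF_eqI)
    show "\<And>i. i \<in> opt_plans Mm Mp c \<Longrightarrow> ereal D \<le> rel_ent i PP" using Dle by blast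
    fix y assume "\<And>i. i \<in> opt_plans Mm Mp c \<Longrightarrow> y \<le> rel_ent i PP"
    then have "y \<le> rel_ent (dens \<rho>s) PP" using rs_opt by blast
    then show "y \<le> ereal D" using rel_ent_dens[OF rs(1)] D_def by simp
  qed
  have uniq: "\<gamma> = dens \<rho>s" if uh1: "\<gamma> \<in> opt_plans Mm Mp c" and uh2: "rel_ent \<gamma> PP = ereal D" for \<gamma>
  proof -
    obtain \<sigma> where s: "adm \<sigma>" "\<gamma> = dens \<sigma>" "Cst \<sigma> = c0" using opt_dens[OF uh1] uh2 by auto
    have Hs: "H \<sigma> = D" using uh2 rel_ent_dens[OF s(1)] s(2) by simp
    have am: "adm (mid \<sigma> \<rho>s)" using adm_mid[OF s(1) rs(1)] .
    have "Cst (mid \<sigma> \<rho>s) = c0" using Cst_mid[OF s(1) rs(1)] s(3) Cs by simp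
    then have "dens (mid \<sigma> \<rho>s) \<in> opt_plans Mm Mp c"
      unfolding opt_plans_def using adm_coupling[OF am] cost_dens[OF am] c0le by auto
    then have "ereal D \<le> ereal (H (mid \<sigma> \<rho>s))" using Dle rel_ent_dens[OF am] by metis
    then have "D \<le> H (mid \<sigma> \<rho>s)" by simp
    also have "\<dots> \<le> (H \<sigma> + H \<rho>s)/2 - (dd \<sigma> \<rho>s)^2/8" using H_mid[OF s(1) rs(1)] .
    finally have "(dd \<sigma> \<rho>s)^2 \<le> 0" using Hs D_def by simp
    then have "dd \<sigma> \<rho>s = 0" by simp
    then show ?thesis using dd_zero_eq[OF s(1) rs(1)] s(2) by simp
  qed
  have ex1: "\<exists>!\<gamma>s. \<gamma>s \<in> opt_plans Mm Mp c \<and> rel_ent \<gamma>s PP = (INF \<gamma>\<in>opt_plans Mm Mp c. rel_ent \<gamma> PP)"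
    using rs_opt rel_ent_dens[OF rs(1)] uniq unfolding INFD D_def by blast
  have THEeq: "(THE \<gamma>s. \<gamma>s \<in> opt_plans Mm Mp c \<and> rel_ent \<gamma>s PP = (INF \<gamma>\<in>opt_plans Mm Mp c. rel_ent \<gamma> PP)) = dens \<rho>s"
    using rs_opt rel_ent_dens[OF rs(1)] uniq unfolding INFD D_def by blast
  have gD: "(g \<longlongrightarrow> D) (at_right 0)"
  proof (rule order_tendstoI)
    fix a assume a: "a < D"
    then have "eventually (\<lambda>n. a < G n) sequentially" using order_tendstoD(1)[OF GLs] DLs by simp
    then obtain N where N: "a < G N" by (auto simp: eventually_sequentially)
    have "eventually (\<lambda>x. x < eps N) (at_right 0)"
      using order_tendstoD(2)[OF tendsto_ident_at eps_pos] by blast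
    then show "eventually (\<lambda>x. a < g x) (at_right 0)" using ev_pos_right
    proof eventually_elim
      case (elim x)
      then have "G N \<le> g x" unfolding G_def using g_mono by simp
      then show ?case using N by simp
    qed
  next
    fix a assume a: "D < a"
    show "eventually (\<lambda>x. g x < a) (at_right 0)" using ev_pos_right
      by eventually_elim (use gLs DLs a in fastforce)
  qed
  have ddD: "(dd (rho e) \<rho>s)^2 \<le> 4 * (D - g e)" if e: "e > 0" for e
  proof -
    have ad: "adm (rho e)" using rho_adm e by auto
    have "FF e (rho e) \<le> FF e (mid (rho e) \<rho>s)" using rho_min[OF e adm_mid[OF ad rs(1)]] .
    also have "\<dots> \<le> (FF e (rho e) + FF e \<rho>s)/2 - e * (dd (rho e) \<rho>s)^2/8"
      using mid_ineq[OF ad rs(1)] e by simp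
    finally have A: "e * (dd (rho e) \<rho>s)^2/8 \<le> (FF e \<rho>s - FF e (rho e))/2" by argo
    have FFs: "FF e \<rho>s = c0 + e * D" unfolding FF_def Cs D_def ..
    have FFe: "FF e (rho e) = cs e + e * g e" unfolding FF_def cs_def g_def ..
    have "e * (dd (rho e) \<rho>s)^2/8 \<le> (e * (D - g e))/2"
      using A csge[OF e] unfolding FFs FFe by (simp add: algebra_simps)
    then have "e * (dd (rho e) \<rho>s)^2 \<le> e * (4 * (D - g e))" by (simp add: field_simps)
    then show ?thesis using e by simp
  qed
  have ddlim: "((\<lambda>e. dd (rho e) \<rho>s) \<longlongrightarrow> 0) (at_right 0)"
  proof (rule Lim_null_comparison)
    show "eventually (\<lambda>e. norm (dd (rho e) \<rho>s) \<le> sqrt (4 * (D - g e))) (at_right 0)"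
      using ev_pos_right
    proof eventually_elim
      case (elim e)
      have "dd (rho e) \<rho>s \<le> sqrt (4 * (D - g e))" using real_le_rsqrt[OF ddD[OF elim]] .
      then show ?case using dd_nonneg[of "rho e" \<rho>s] by simp
    qed
    have t1: "((\<lambda>e. D - g e) \<longlongrightarrow> D - D) (at_right 0)" by (rule tendsto_diff[OF tendsto_const gD])
    have t2: "((\<lambda>e. 4 * (D - g e)) \<longlongrightarrow> 4 * (D - D)) (at_right 0)" by (rule tendsto_mult[OF tendsto_const t1])
    have "((\<lambda>e. sqrt (4 * (D - g e))) \<longlongrightarrow> sqrt (4 * (D - D))) (at_right 0)" by (rule tendsto_real_sqrt[OF t2])
    then show "((\<lambda>e. sqrt (4 * (D - g e))) \<longlongrightarrow> 0) (at_right 0)" by (rule tendsto_cong_limit) simp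
  qed
  have narrow: "narrow_tendsto (ent_plan Mm Mp c) (dens \<rho>s) (at_right 0)"
    unfolding narrow_tendsto_def
  proof (intro allI impI)
    fix f :: "'a \<times> 'a \<Rightarrow> real" assume fa: "continuous_on UNIV f \<and> bounded (range f)"
    then have fm: "f \<in> borel_measurable PP" unfolding meas_PP using borel_measurable_continuous_onI by blast
    obtain Bf where Bf: "\<And>z. \<bar>f z\<bar> \<le> Bf" using fa unfolding bounded_iff by auto
    have intd: "(\<integral>z. f z \<partial>dens \<sigma>) = (\<integral>z. \<sigma> z * f z \<partial>PP)" if "adm \<sigma>" for \<sigma>
      unfolding dens_def using that fm unfolding adm_def by (subst integral_density) auto
    have "((\<lambda>e. (\<integral>z. f z \<partial>ent_plan Mm Mp c e) - (\<integral>z. f z \<partial>dens \<rho>s)) \<longlongrightarrow> 0) (at_right 0)"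
    proof (rule Lim_null_comparison)
      show "eventually (\<lambda>e. norm ((\<integral>z. f z \<partial>ent_plan Mm Mp c e) - (\<integral>z. f z \<partial>dens \<rho>s)) \<le> Bf * dd (rho e) \<rho>s) (at_right 0)"
        using ev_pos_right
      proof eventually_elim
        case (elim e)
        have ad: "adm (rho e)" using rho_adm elim by auto
        show ?case unfolding ent_plan_eq[OF elim] intd[OF ad] intd[OF rs(1)]
          using int_diff_bound[of "rho e" \<rho>s f Bf] ad rs(1) fm Bf unfolding adm_def by simp
      qed
      show "((\<lambda>e. Bf * dd (rho e) \<rho>s) \<longlongrightarrow> 0) (at_right 0)" using tendsto_mult_right_zero[OF ddlim] by simp
    qed
    then show "((\<lambda>e. \<integral>z. f z \<partial>ent_plan Mm Mp c e) \<longlongrightarrow> (\<integral>z. f z \<partial>dens \<rho>s)) (at_right 0)"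
      by (simp add: LIM_zero_iff)
  qed
  have qD: "((\<lambda>y. (ot_val Mm Mp c y - ot_val Mm Mp c 0) / (y - 0) - D) \<longlongrightarrow> 0) (at_right 0)"
  proof (rule Lim_null_comparison)
    show "eventually (\<lambda>y. norm ((ot_val Mm Mp c y - ot_val Mm Mp c 0) / (y - 0) - D) \<le> D - g y) (at_right 0)"
      using ev_pos_right
    proof eventually_elim
      case (elim y)
      have up: "ot_val Mm Mp c y \<le> c0 + y * D"
        using ot_val_pos[OF elim] rho_min[OF elim rs(1)] unfolding FF_def Cs D_def by simp
      have lo: "ot_val Mm Mp c y \<ge> c0 + y * g y" using v_eq[OF elim] csge[OF elim] by simp
      have "(ot_val Mm Mp c y - ot_val Mm Mp c 0) / (y - 0) \<le> D"
        using up elim v0 by (simp add: pos_divide_le_eq mult.commute)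
      moreover have "g y \<le> (ot_val Mm Mp c y - ot_val Mm Mp c 0) / (y - 0)"
        using lo elim v0 by (simp add: pos_le_divide_eq mult.commute)
      ultimately show ?case by (simp add: abs_le_iff)
    qed
    have "((\<lambda>y. D - g y) \<longlongrightarrow> D - D) (at_right 0)" by (rule tendsto_diff[OF tendsto_const gD])
    then show "((\<lambda>y. D - g y) \<longlongrightarrow> 0) (at_right 0)" by simp
  qed
  define v' where "v' e = (if e = 0 then D else g e)" for e :: real
  have deriv: "\<forall>\<epsilon>\<ge>0. (ot_val Mm Mp c has_real_derivative v' \<epsilon>) (at \<epsilon> within {0..})"
  proof (intro allI impI)
    fix e :: real assume "e \<ge> 0"
    show "(ot_val Mm Mp c has_real_derivative v' e) (at e within {0..})"
    proof (cases "e = 0")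
      case True
      have "((\<lambda>y. (ot_val Mm Mp c y - ot_val Mm Mp c 0) / (y - 0)) \<longlongrightarrow> D) (at_right 0)"
        using qD by (simp add: LIM_zero_iff)
      then show ?thesis unfolding True v'_def has_field_derivative_iff at_within_Ici0 by simp
    next
      case False
      then have "e > 0" using \<open>e \<ge> 0\<close> by simp
      then show ?thesis unfolding v'_def using deriv_pos[of e] False
        by (simp add: has_field_derivative_at_within)
    qed
  qed
  have cont: "continuous_on {0..} v'"
    unfolding continuous_on_eq_continuous_within
  proof (intro ballI)
    fix x :: real assume "x \<in> {0..}"
    show "continuous (at x within {0..}) v'"
    proof (cases "x = 0")
      case True
      have ev: "eventually (\<lambda>y. g y = v' y) (at_right 0)" using ev_pos_right
        by eventually_elim (simp add: v'_def)
      have "(v' \<longlongrightarrow> D) (at_right 0)" by (rule iffD1[OF tendsto_cong[OF ev] gD])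
      then show ?thesis unfolding True continuous_within at_within_Ici0 by (simp add: v'_def)
    next
      case False
      then have xp: "x > 0" using \<open>x \<in> {0..}\<close> by simp
      have "eventually (\<lambda>y. y > 0) (at x)" using xp by (rule order_tendstoD(1)[OF tendsto_ident_at])
      then have ev: "eventually (\<lambda>y. g y = v' y) (at x)" by eventually_elim (simp add: v'_def)
      have "(v' \<longlongrightarrow> g x) (at x)" by (rule iffD1[OF tendsto_cong[OF ev] g_cont[OF xp]])
      then have "(v' \<longlongrightarrow> v' x) (at x within {0..})" using False unfolding v'_def
        by (auto intro: tendsto_mono[OF at_le])
      then show ?thesis unfolding continuous_within .
    qed
  qed
  have small_o: "((\<lambda>\<epsilon>. (ot_val Mm Mp c \<epsilon> - ot_val Mm Mp c 0 - \<epsilon> * D) / \<epsilon>) \<longlongrightarrow> 0) (at_right 0)"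
  proof -
    have ev: "eventually (\<lambda>y. (ot_val Mm Mp c y - ot_val Mm Mp c 0) / (y - 0) - D =
          (ot_val Mm Mp c y - ot_val Mm Mp c 0 - y * D) / y) (at_right 0)"
      using ev_pos_right
    proof eventually_elim
      case (elim y)
      then have "y \<noteq> 0" by simp
      then show ?case by (simp add: diff_divide_distrib)
    qed
    show ?thesis by (rule iffD1[OF tendsto_cong[OF ev] qD])
  qed
  show ?thesis
    using INFD deriv cont small_o ex1 narrow unfolding THEeq
    by (intro exI[of _ v'] exI[of _ D]) (simp add: v'_def)
qed

end

theorem corollary2p4:
  fixes Mm Mp :: "'a::euclidean_space measure"
    and c :: "'a \<times> 'a \<Rightarrow> real"
  assumes "prob_space Mm" and "sets Mm = sets borel"
    and "prob_space Mp" and "sets Mp = sets borel"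
    and "compact (mu_support Mm)" and "compact (mu_support Mp)"
    and "continuous_on (mu_support Mm \<times> mu_support Mp) c"
  shows "(\<forall>\<epsilon>>0. \<exists>D. rel_ent (ent_plan Mm Mp c \<epsilon>) (Mm \<Otimes>\<^sub>M Mp) = ereal D \<and>
                   (ot_val Mm Mp c has_real_derivative D) (at \<epsilon>))
     \<and> ((\<exists>\<gamma>0\<in>opt_plans Mm Mp c. rel_ent \<gamma>0 (Mm \<Otimes>\<^sub>M Mp) < \<infinity>) \<longrightarrow>
         (\<exists>v' D. (INF \<gamma>\<in>opt_plans Mm Mp c. rel_ent \<gamma> (Mm \<Otimes>\<^sub>M Mp)) = ereal D \<and>
            v' 0 = D \<and>
            (\<forall>\<epsilon>\<ge>0. (ot_val Mm Mp c has_real_derivative v' \<epsilon>) (at \<epsilon> within {0..})) \<and>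
            continuous_on {0..} v' \<and>
            ((\<lambda>\<epsilon>. (ot_val Mm Mp c \<epsilon> - ot_val Mm Mp c 0 - \<epsilon> * D) / \<epsilon>) \<longlongrightarrow> 0) (at_right 0) \<and>
            (\<exists>!\<gamma>s. \<gamma>s \<in> opt_plans Mm Mp c \<and>
                    rel_ent \<gamma>s (Mm \<Otimes>\<^sub>M Mp) = (INF \<gamma>\<in>opt_plans Mm Mp c. rel_ent \<gamma> (Mm \<Otimes>\<^sub>M Mp))) \<and>
            narrow_tendsto (ent_plan Mm Mp c)
              (THE \<gamma>s. \<gamma>s \<in> opt_plans Mm Mp c \<and>
                    rel_ent \<gamma>s (Mm \<Otimes>\<^sub>M Mp) = (INF \<gamma>\<in>opt_plans Mm Mp c. rel_ent \<gamma> (Mm \<Otimes>\<^sub>M Mp)))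
              (at_right 0)))"
proof -
  interpret ot Mm Mp c by (rule ot.intro) (rule assms)+
  show ?thesis by (rule conjI[OF part1], rule impI, rule part2)
qed

end
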